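(* Let $m(n)$ denote the number of unlabeled modular lattices with $n$ elements. Then $m(n) \ge \Omega(2.1332^n)$, i.e., there is a constant $b>0$ such that $m(n) \ge b \cdot 2.1332^n$ for all sufficiently large $n$.
   Context: All lattices are finite and nonempty, counted up to isomorphism. *)

theory Defs
  imports Complex_Main
begin

definition is_lub :: "'a set \<Rightarrow> 'a rel \<Rightarrow> 'a \<Rightarrow> 'a \<Rightarrow> 'a \<Rightarrow> bool" where
  "is_lub A r x y z \<longleftrightarrow> z \<in> A \<and> (x, z) \<in> r \<and> (y, z) \<in> r \<and>
     (\<forall>w\<in>A. (x, w) \<in> r \<and> (y, w) \<in> r \<longrightarrow> (z, w) \<in> r)"

definition is_glb :: "'a set \<Rightarrow> 'a rel \<Rightarrow> 'a \<Rightarrow> 'a \<Rightarrow> 'a \<Rightarrow> bool" where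
  "is_glb A r x y z \<longleftrightarrow> z \<in> A \<and> (z, x) \<in> r \<and> (z, y) \<in> r \<and>
     (\<forall>w\<in>A. (w, x) \<in> r \<and> (w, y) \<in> r \<longrightarrow> (w, z) \<in> r)"

definition ljoin :: "'a set \<Rightarrow> 'a rel \<Rightarrow> 'a \<Rightarrow> 'a \<Rightarrow> 'a" where
  "ljoin A r x y = (THE z. is_lub A r x y z)"

definition lmeet :: "'a set \<Rightarrow> 'a rel \<Rightarrow> 'a \<Rightarrow> 'a \<Rightarrow> 'a" where
  "lmeet A r x y = (THE z. is_glb A r x y z)"

definition lattice_on :: "'a set \<Rightarrow> 'a rel \<Rightarrow> bool" where
  "lattice_on A r \<longleftrightarrow> A \<noteq> {} \<and> r \<subseteq> A \<times> A \<and> partial_order_on A r \<and>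
     (\<forall>x\<in>A. \<forall>y\<in>A. (\<exists>z. is_lub A r x y z) \<and> (\<exists>z. is_glb A r x y z))"

definition modular_lattice_on :: "'a set \<Rightarrow> 'a rel \<Rightarrow> bool" where
  "modular_lattice_on A r \<longleftrightarrow> lattice_on A r \<and>
     (\<forall>x\<in>A. \<forall>y\<in>A. \<forall>z\<in>A. (x, z) \<in> r \<longrightarrow>
        ljoin A r x (lmeet A r y z) = lmeet A r (ljoin A r x y) z)"

definition order_iso_on :: "'a set \<Rightarrow> 'a rel \<Rightarrow> 'a rel \<Rightarrow> bool" where
  "order_iso_on A r s \<longleftrightarrow> (\<exists>f. bij_betw f A A \<and>
     (\<forall>x\<in>A. \<forall>y\<in>A. (x, y) \<in> r \<longleftrightarrow> (f x, f y) \<in> s))"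

definition num_modular_lattices :: "nat \<Rightarrow> nat" where
  "num_modular_lattices n =
     card ({r. modular_lattice_on {0..<n} r} //
           {(r, s). modular_lattice_on {0..<n} r \<and> modular_lattice_on {0..<n} s
                    \<and> order_iso_on {0..<n} r s})"

end

theory Submission
  imports Defs
begin

definition relof :: "'a set \<Rightarrow> ('a \<Rightarrow> 'a \<Rightarrow> bool) \<Rightarrow> 'a rel" where
  "relof A le = {(x, y). x \<in> A \<and> y \<in> A \<and> le x y}"

locale vlat =
  fixes A :: "'a set" and le :: "'a \<Rightarrow> 'a \<Rightarrow> bool"
    and jn :: "'a \<Rightarrow> 'a \<Rightarrow> 'a" and mt :: "'a \<Rightarrow> 'a \<Rightarrow> 'a" and h :: "'a \<Rightarrow> nat"
  assumes ne: "A \<noteq> {}"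
    and rfl: "x \<in> A \<Longrightarrow> le x x"
    and asym: "x \<in> A \<Longrightarrow> y \<in> A \<Longrightarrow> le x y \<Longrightarrow> le y x \<Longrightarrow> x = y"
    and trn: "x \<in> A \<Longrightarrow> y \<in> A \<Longrightarrow> z \<in> A \<Longrightarrow> le x y \<Longrightarrow> le y z \<Longrightarrow> le x z"
    and jn_in: "x \<in> A \<Longrightarrow> y \<in> A \<Longrightarrow> jn x y \<in> A"
    and jn1: "x \<in> A \<Longrightarrow> y \<in> A \<Longrightarrow> le x (jn x y)"
    and jn2: "x \<in> A \<Longrightarrow> y \<in> A \<Longrightarrow> le y (jn x y)"
    and jn3: "x \<in> A \<Longrightarrow> y \<in> A \<Longrightarrow> z \<in> A \<Longrightarrow> le x z \<Longrightarrow> le y z \<Longrightarrow> le (jn x y) z"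
    and mt_in: "x \<in> A \<Longrightarrow> y \<in> A \<Longrightarrow> mt x y \<in> A"
    and mt1: "x \<in> A \<Longrightarrow> y \<in> A \<Longrightarrow> le (mt x y) x"
    and mt2: "x \<in> A \<Longrightarrow> y \<in> A \<Longrightarrow> le (mt x y) y"
    and mt3: "x \<in> A \<Longrightarrow> y \<in> A \<Longrightarrow> z \<in> A \<Longrightarrow> le z x \<Longrightarrow> le z y \<Longrightarrow> le z (mt x y)"
    and hstrict: "x \<in> A \<Longrightarrow> y \<in> A \<Longrightarrow> le x y \<Longrightarrow> x \<noteq> y \<Longrightarrow> h x < h y"
    and hval: "x \<in> A \<Longrightarrow> y \<in> A \<Longrightarrow> h x + h y = h (jn x y) + h (mt x y)"
begin

lemma lub: "x \<in> A \<Longrightarrow> y \<in> A \<Longrightarrow> is_lub A (relof A le) x y (jn x y)"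
  unfolding is_lub_def relof_def using jn_in jn1 jn2 jn3 by auto

lemma glb: "x \<in> A \<Longrightarrow> y \<in> A \<Longrightarrow> is_glb A (relof A le) x y (mt x y)"
  unfolding is_glb_def relof_def using mt_in mt1 mt2 mt3 by auto

lemma ljoin_eq:
  assumes x: "x \<in> A" and y: "y \<in> A"
  shows "ljoin A (relof A le) x y = jn x y"
  unfolding ljoin_def
proof (rule the_equality)
  show "is_lub A (relof A le) x y (jn x y)" using x y by (rule lub)
next
  fix z assume a: "is_lub A (relof A le) x y z"
  then have za: "z \<in> A" and "le x z" "le y z" "le z (jn x y)"
    unfolding is_lub_def relof_def using x y jn_in jn1 jn2 by auto
  then have "le (jn x y) z" using jn3 x y by blast
  then show "z = jn x y" using asym[OF za jn_in[OF x y]] \<open>le z (jn x y)\<close> by blast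
qed

lemma lmeet_eq:
  assumes x: "x \<in> A" and y: "y \<in> A"
  shows "lmeet A (relof A le) x y = mt x y"
  unfolding lmeet_def
proof (rule the_equality)
  show "is_glb A (relof A le) x y (mt x y)" using x y by (rule glb)
next
  fix z assume a: "is_glb A (relof A le) x y z"
  then have za: "z \<in> A" and "le z x" "le z y" "le (mt x y) z"
    unfolding is_glb_def relof_def using x y mt_in mt1 mt2 by auto
  then have "le z (mt x y)" using mt3 x y by blast
  then show "z = mt x y" using asym[OF za mt_in[OF x y]] \<open>le (mt x y) z\<close> by blast
qed

lemma modular_law:
  assumes x: "x \<in> A" and y: "y \<in> A" and z: "z \<in> A" and xz: "le x z"
  shows "jn x (mt y z) = mt (jn x y) z"
proof -
  define myz where "myz = mt y z"
  define jxy where "jxy = jn x y"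
  define a where "a = jn x myz"
  define b where "b = mt jxy z"
  have myzA: "myz \<in> A" and jxyA: "jxy \<in> A" using x y z mt_in jn_in myz_def jxy_def by auto
  have aA: "a \<in> A" and bA: "b \<in> A" using a_def b_def myzA jxyA x z jn_in mt_in by auto
  have "le myz jxy" using trn[OF myzA y jxyA] mt1[OF y z] jn2[OF x y] myz_def jxy_def by simp
  have "le x b" using mt3[OF jxyA z x] jn1[OF x y] xz b_def jxy_def by simp
  moreover have "le myz b" using mt3[OF jxyA z myzA] \<open>le myz jxy\<close> mt2[OF y z] b_def myz_def by simp
  ultimately have ab: "le a b" using jn3[OF x myzA bA] a_def by simp
  have m1: "mt x myz = mt x y"
  proof (rule asym)
    show "mt x myz \<in> A" "mt x y \<in> A" using x y myzA mt_in by auto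
    show "le (mt x myz) (mt x y)"
      using mt3[OF x y] mt1[OF x myzA] trn[OF mt_in[OF x myzA] myzA y] mt2[OF x myzA] mt1[OF y z]
        mt_in[OF x myzA] myz_def x by auto
    have "le (mt x y) myz"
      using mt3[OF y z mt_in[OF x y]] mt2[OF x y] trn[OF mt_in[OF x y] x z] mt1[OF x y] xz myz_def by auto
    then show "le (mt x y) (mt x myz)" using mt3[OF x myzA mt_in[OF x y]] mt1[OF x y] by auto
  qed
  have j1: "jn jxy z = jn y z"
  proof (rule asym)
    show "jn jxy z \<in> A" "jn y z \<in> A" using jxyA z y jn_in by auto
    have "le jxy (jn y z)"
      using jn3[OF x y jn_in[OF y z]] trn[OF x z jn_in[OF y z]] xz jn2[OF y z] jn1[OF y z] jxy_def by auto
    then show "le (jn jxy z) (jn y z)" using jn3[OF jxyA z jn_in[OF y z]] jn2[OF y z] by auto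
    have "le y (jn jxy z)" using trn[OF y jxyA jn_in[OF jxyA z]] jn2[OF x y] jn1[OF jxyA z] jxy_def by auto
    then show "le (jn y z) (jn jxy z)" using jn3[OF y z jn_in[OF jxyA z]] jn2[OF jxyA z] by auto
  qed
  have e1: "h x + h myz = h a + h (mt x y)" using hval[OF x myzA] a_def m1 by simp
  have e2: "h jxy + h z = h (jn y z) + h b" using hval[OF jxyA z] b_def j1 by simp
  have e3: "h x + h y = h jxy + h (mt x y)" using hval[OF x y] jxy_def by simp
  have e4: "h y + h z = h (jn y z) + h myz" using hval[OF y z] myz_def by simp
  have "h a = h b" using e1 e2 e3 e4 by linarith
  then have "a = b" using hstrict[OF aA bA ab] by (cases "a = b") auto
  then show ?thesis using a_def b_def myz_def jxy_def by simp
qed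

theorem modular: "modular_lattice_on A (relof A le)"
  unfolding modular_lattice_on_def lattice_on_def
proof (intro conjI ballI impI)
  show "A \<noteq> {}" by (rule ne)
  show "relof A le \<subseteq> A \<times> A" unfolding relof_def by auto
  show "partial_order_on A (relof A le)"
    unfolding partial_order_on_def preorder_on_def
  proof (intro conjI)
    show "relof A le \<subseteq> A \<times> A" unfolding relof_def by auto
    show "refl_on A (relof A le)" unfolding refl_on_def relof_def using rfl by simp
    show "trans (relof A le)" unfolding relof_def
      by (rule transI) (use trn in blast)
    show "antisym (relof A le)" unfolding relof_def
      by (rule antisymI) (use asym in blast)
  qed
  fix x y assume "x \<in> A" "y \<in> A"
  then show "\<exists>z. is_lub A (relof A le) x y z" "\<exists>z. is_glb A (relof A le) x y z"
    using lub glb by blast+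
next
  fix x y z assume a: "x \<in> A" "y \<in> A" "z \<in> A" "(x, z) \<in> relof A le"
  then have "le x z" unfolding relof_def by auto
  then show "ljoin A (relof A le) x (lmeet A (relof A le) y z) =
        lmeet A (relof A le) (ljoin A (relof A le) x y) z"
    using a ljoin_eq lmeet_eq modular_law mt_in jn_in by simp
qed

end

lemma vlat_transport:
  assumes v: "vlat S le jn mt h" and g: "bij_betw g S B" and gi_def: "gi = inv_into S g"
  shows "vlat B (\<lambda>i j. le (gi i) (gi j)) (\<lambda>i j. g (jn (gi i) (gi j)))
           (\<lambda>i j. g (mt (gi i) (gi j))) (\<lambda>i. h (gi i))"
proof -
  interpret vlat S le jn mt h by (rule v)
  have bgi: "bij_betw gi B S" unfolding gi_def by (rule bij_betw_inv_into[OF g])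
  have gi: "\<And>i. i \<in> B \<Longrightarrow> gi i \<in> S" using bij_betwE[OF bgi] by blast
  have gig: "\<And>x. x \<in> S \<Longrightarrow> gi (g x) = x" unfolding gi_def using g
    by (rule bij_betw_inv_into_left)
  have ggi: "\<And>i. i \<in> B \<Longrightarrow> g (gi i) = i" unfolding gi_def using g
    by (rule bij_betw_inv_into_right)
  have gB: "\<And>x. x \<in> S \<Longrightarrow> g x \<in> B" using bij_betwE[OF g] by blast
  have BS: "B = g ` S" using g by (simp add: bij_betw_def)
  show ?thesis
  proof (unfold_locales, goal_cases)
    case 1 show ?case using ne BS by auto
  next
    case (2 x) show ?case by (rule rfl[OF gi[OF 2]])
  next
    case (3 x y)
    have "gi x = gi y" by (rule asym[OF gi[OF 3(1)] gi[OF 3(2)] 3(3) 3(4)])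
    then have "g (gi x) = g (gi y)" by simp
    then show ?case using ggi[OF 3(1)] ggi[OF 3(2)] by simp
  next
    case (4 x y z) show ?case by (rule trn[OF gi[OF 4(1)] gi[OF 4(2)] gi[OF 4(3)] 4(4) 4(5)])
  next
    case (5 x y) show ?case by (rule gB[OF jn_in[OF gi[OF 5(1)] gi[OF 5(2)]]])
  next
    case (6 x y) show ?case unfolding gig[OF jn_in[OF gi[OF 6(1)] gi[OF 6(2)]]] by (rule jn1[OF gi[OF 6(1)] gi[OF 6(2)]])
  next
    case (7 x y) show ?case unfolding gig[OF jn_in[OF gi[OF 7(1)] gi[OF 7(2)]]] by (rule jn2[OF gi[OF 7(1)] gi[OF 7(2)]])
  next
    case (8 x y z) show ?case unfolding gig[OF jn_in[OF gi[OF 8(1)] gi[OF 8(2)]]] by (rule jn3[OF gi[OF 8(1)] gi[OF 8(2)] gi[OF 8(3)] 8(4) 8(5)])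
  next
    case (9 x y) show ?case by (rule gB[OF mt_in[OF gi[OF 9(1)] gi[OF 9(2)]]])
  next
    case (10 x y) show ?case unfolding gig[OF mt_in[OF gi[OF 10(1)] gi[OF 10(2)]]] by (rule mt1[OF gi[OF 10(1)] gi[OF 10(2)]])
  next
    case (11 x y) show ?case unfolding gig[OF mt_in[OF gi[OF 11(1)] gi[OF 11(2)]]] by (rule mt2[OF gi[OF 11(1)] gi[OF 11(2)]])
  next
    case (12 x y z) show ?case unfolding gig[OF mt_in[OF gi[OF 12(1)] gi[OF 12(2)]]] by (rule mt3[OF gi[OF 12(1)] gi[OF 12(2)] gi[OF 12(3)] 12(4) 12(5)])
  next
    case (13 x y)
    have "gi x \<noteq> gi y"
    proof
      assume "gi x = gi y"
      then have "g (gi x) = g (gi y)" by simp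
      then show False using ggi[OF 13(1)] ggi[OF 13(2)] 13(4) by simp
    qed
    then show ?case by (rule hstrict[OF gi[OF 13(1)] gi[OF 13(2)] 13(3)])
  next
    case (14 x y) show ?case
      unfolding gig[OF jn_in[OF gi[OF 14(1)] gi[OF 14(2)]]] gig[OF mt_in[OF gi[OF 14(1)] gi[OF 14(2)]]]
      by (rule hval[OF gi[OF 14(1)] gi[OF 14(2)]])
  qed
qed


type_synonym el = "nat \<times> nat \<times> nat"

definition ind :: "nat \<Rightarrow> nat" where "ind t = (if t = 0 then 0 else 1)"

lemma ind_0 [simp]: "ind 0 = 0" by (simp add: ind_def)
lemma ind_pos [simp]: "t \<noteq> 0 \<Longrightarrow> ind t = 1" by (simp add: ind_def)

fun gle :: "el \<Rightarrow> el \<Rightarrow> bool" where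
  "gle (x, y, t) (x', y', t') \<longleftrightarrow>
     (x = x' \<and> y = y' \<and> t = t') \<or> (x + ind t \<le> x' \<and> y + ind t \<le> y')"

fun gjn :: "el \<Rightarrow> el \<Rightarrow> el" where
  "gjn (x, y, t) (x', y', t') =
     (if gle (x, y, t) (x', y', t') then (x', y', t')
      else if gle (x', y', t') (x, y, t) then (x, y, t)
      else (max (x + ind t) (x' + ind t'), max (y + ind t) (y' + ind t'), 0))"

fun gmt :: "el \<Rightarrow> el \<Rightarrow> el" where
  "gmt (x, y, t) (x', y', t') =
     (if gle (x, y, t) (x', y', t') then (x, y, t)
      else if gle (x', y', t') (x, y, t) then (x', y', t')
      else (min x x', min y y', 0))"

fun gh :: "el \<Rightarrow> nat" where
  "gh (x, y, t) = x + y + ind t"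

lemma gle_refl: "gle u u"
  by (cases u) auto

lemma gle_antisym: "gle u v \<Longrightarrow> gle v u \<Longrightarrow> u = v"
  by (cases u; cases v) (auto simp: ind_def split: if_splits)

lemma gle_trans: "gle u v \<Longrightarrow> gle v w \<Longrightarrow> gle u w"
  by (cases u; cases v; cases w) (auto simp: ind_def split: if_splits)

lemma gjn1: "gle u (gjn u v)"
  by (cases u; cases v) (auto simp: ind_def split: if_splits)

lemma gjn2: "gle v (gjn u v)"
  by (cases u; cases v) (auto simp: ind_def split: if_splits)

lemma gjn3: "gle u w \<Longrightarrow> gle v w \<Longrightarrow> gle (gjn u v) w"
  by (cases u; cases v; cases w) (auto simp: ind_def split: if_splits)

lemma gmt1: "gle (gmt u v) u"
  by (cases u; cases v) (auto simp: ind_def split: if_splits)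

lemma gmt2: "gle (gmt u v) v"
  by (cases u; cases v) (auto simp: ind_def split: if_splits)

lemma gmt3: "gle w u \<Longrightarrow> gle w v \<Longrightarrow> gle w (gmt u v)"
  by (cases u; cases v; cases w) (auto simp: ind_def split: if_splits)

lemma gh_strict: "gle u v \<Longrightarrow> u \<noteq> v \<Longrightarrow> gh u < gh v"
  by (cases u; cases v) (auto simp: ind_def split: if_splits)

lemma gh_val: "gh u + gh v = gh (gjn u v) + gh (gmt u v)"
  by (cases u; cases v) (auto simp: ind_def max_def min_def split: if_splits)


definition Nv :: "'a set \<Rightarrow> ('a \<Rightarrow> nat) \<Rightarrow> nat \<Rightarrow> nat" where
  "Nv A h k = card {u \<in> A. h u = k}"

definition Pv :: "'a set \<Rightarrow> ('a \<Rightarrow> 'a \<Rightarrow> bool) \<Rightarrow> ('a \<Rightarrow> nat) \<Rightarrow> nat \<Rightarrow> bool" where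
  "Pv A le h k \<longleftrightarrow> (\<exists>u\<in>A. h u = k \<and>
     (\<exists>v1\<in>A. \<exists>v2\<in>A. v1 \<noteq> v2 \<and> le v1 u \<and> le v2 u \<and> Suc (h v1) = k \<and> Suc (h v2) = k) \<and>
     (\<exists>z1\<in>A. \<exists>z2\<in>A. z1 \<noteq> z2 \<and> le u z1 \<and> le u z2 \<and> h z1 = Suc k \<and> h z2 = Suc k))"

locale shape =
  fixes H :: nat and l r e :: "nat \<Rightarrow> nat"
  assumes l0: "l 0 = 0" and r0: "r 0 = 0"
    and lr: "\<And>j. l j \<le> r j" and rl: "\<And>j. r j \<le> Suc (l j)"
    and rs: "\<And>j. r (Suc j) = r j \<or> r (Suc j) = Suc (r j)"
    and ls: "\<And>j. l (Suc j) = l j \<or> l (Suc j) = Suc (l j)"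
    and top: "l H = r H"
begin

definition dom :: "(nat \<times> nat) set" where
  "dom = {(x, y). x + y \<le> H \<and> l (x + y) \<le> x \<and> x \<le> r (x + y)}"

definition S :: "el set" where
  "S = {(x, y, 0) | x y. (x, y) \<in> dom} \<union>
       {(l k, k - r k, t) | k t. k \<le> H \<and> r k = Suc (l k) \<and> 1 \<le> t \<and> t \<le> e k}"

lemma r_mono: "i \<le> j \<Longrightarrow> r i \<le> r j"
proof (induction j rule: dec_induct)
  case (step n) then show ?case using rs[of n] by auto
qed simp

lemma l_mono: "i \<le> j \<Longrightarrow> l i \<le> l j"
proof (induction j rule: dec_induct)
  case (step n) then show ?case using ls[of n] by auto
qed simp

lemma r_lip: "i \<le> j \<Longrightarrow> r j \<le> r i + (j - i)"
proof (induction j rule: dec_induct)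
  case (step n) then show ?case using rs[of n] by auto
qed simp

lemma l_lip: "i \<le> j \<Longrightarrow> l j \<le> l i + (j - i)"
proof (induction j rule: dec_induct)
  case (step n) then show ?case using ls[of n] by auto
qed simp

lemma r_le: "r j \<le> j"
  using r_lip[of 0 j] r0 by simp

lemma l_le: "l j \<le> j"
  using r_le[of j] lr[of j] by simp

lemma rt_x: "x \<le> r (x + y) \<Longrightarrow> x' \<le> x \<Longrightarrow> x' \<le> r (x' + y)"
  using r_lip[of "x' + y" "x + y"] by simp

lemma rt_y: "x \<le> r (x + y) \<Longrightarrow> y \<le> y' \<Longrightarrow> x \<le> r (x + y')"
  using r_mono[of "x + y" "x + y'"] by simp

lemma lt_y: "l (x + y) \<le> x \<Longrightarrow> y' \<le> y \<Longrightarrow> l (x + y') \<le> x"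
  using l_mono[of "x + y'" "x + y"] by simp

lemma lt_x: "l (x + y) \<le> x \<Longrightarrow> x \<le> x' \<Longrightarrow> l (x' + y) \<le> x'"
  using l_lip[of "x + y" "x' + y"] by simp

lemma below_top: "(x, y) \<in> dom \<Longrightarrow> x \<le> r H \<and> y + r H \<le> H"
proof -
  assume "(x, y) \<in> dom"
  then have a: "x + y \<le> H" "l (x + y) \<le> x" "x \<le> r (x + y)" unfolding dom_def by auto
  have "r (x + y) \<le> r H" using r_mono a(1) by blast
  moreover have "l H \<le> l (x + y) + (H - (x + y))" using l_lip a(1) by blast
  ultimately show ?thesis using a top by linarith
qed

lemma dom_min: "(x, y) \<in> dom \<Longrightarrow> (x', y') \<in> dom \<Longrightarrow> (min x x', min y y') \<in> dom"
proof -
  assume a: "(x, y) \<in> dom" and b: "(x', y') \<in> dom"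
  from a have a1: "x + y \<le> H" "l (x + y) \<le> x" "x \<le> r (x + y)" unfolding dom_def by auto
  from b have b1: "x' + y' \<le> H" "l (x' + y') \<le> x'" "x' \<le> r (x' + y')" unfolding dom_def by auto
  show ?thesis
  proof (cases "x \<le> x'")
    case True
    show ?thesis
    proof (cases "y \<le> y'")
      case True then show ?thesis using a \<open>x \<le> x'\<close> by (simp add: min_def)
    next
      case False
      have "x \<le> r (x + y')" using rt_x[OF b1(3) True] by simp
      moreover have "l (x + y') \<le> x" using lt_y[OF a1(2)] False by simp
      ultimately show ?thesis using True False b1(1) unfolding dom_def by (simp add: min_def)
    qed
  next
    case False
    show ?thesis
    proof (cases "y' \<le> y")
      case True then show ?thesis using b False by (simp add: min_def)
    next
      case F2: False
      have "x' \<le> r (x' + y)" using rt_x[OF a1(3)] False by simp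
      moreover have "l (x' + y) \<le> x'" using lt_y[OF b1(2)] F2 by simp
      ultimately show ?thesis using False F2 a1(1) unfolding dom_def by (simp add: min_def)
    qed
  qed
qed

lemma dom_max: "(x, y) \<in> dom \<Longrightarrow> (x', y') \<in> dom \<Longrightarrow> (max x x', max y y') \<in> dom"
proof -
  assume a: "(x, y) \<in> dom" and b: "(x', y') \<in> dom"
  from a have a1: "x + y \<le> H" "l (x + y) \<le> x" "x \<le> r (x + y)" unfolding dom_def by auto
  from b have b1: "x' + y' \<le> H" "l (x' + y') \<le> x'" "x' \<le> r (x' + y')" unfolding dom_def by auto
  have lev: "max x x' + max y y' \<le> H" using below_top[OF a] below_top[OF b] by (simp add: max_def)
  show ?thesis
  proof (cases "x \<le> x'")
    case True
    show ?thesis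
    proof (cases "y \<le> y'")
      case True then show ?thesis using b \<open>x \<le> x'\<close> by (simp add: max_def)
    next
      case False
      have "x' \<le> r (x' + y)" using rt_y[OF b1(3)] False by simp
      moreover have "l (x' + y) \<le> x'" using lt_x[OF a1(2) True] by simp
      ultimately show ?thesis using True False lev unfolding dom_def by (simp add: max_def)
    qed
  next
    case False
    show ?thesis
    proof (cases "y' \<le> y")
      case True then show ?thesis using a False by (simp add: max_def)
    next
      case F2: False
      have "x \<le> r (x + y')" using rt_y[OF a1(3)] F2 by simp
      moreover have "l (x + y') \<le> x" using lt_x[OF b1(2)] False by simp
      ultimately show ?thesis using False F2 lev unfolding dom_def by (simp add: max_def)
    qed
  qed
qed

lemma eye_level:
  assumes "k \<le> H" "r k = Suc (l k)"
  shows "1 \<le> k" "k < H" "r k \<le> k"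
proof -
  show "1 \<le> k" using assms l0 r0 by (cases k) auto
  show "k < H" using assms top by (cases "k = H") auto
  show "r k \<le> k" by (rule r_le)
qed

lemma eye_lo: "k \<le> H \<Longrightarrow> r k = Suc (l k) \<Longrightarrow> (l k, k - r k) \<in> dom"
proof -
  assume a: "k \<le> H" "r k = Suc (l k)"
  note el = eye_level[OF a]
  obtain j where j: "k = Suc j" using el(1) by (cases k) auto
  have "l j \<le> l k" using l_mono j by simp
  moreover have "r k \<le> r j + 1" using r_lip[of j k] j by simp
  moreover have "l k + (k - r k) = j" using a el j by simp
  ultimately show ?thesis unfolding dom_def using a j by simp
qed

lemma eye_hi: "k \<le> H \<Longrightarrow> r k = Suc (l k) \<Longrightarrow> (Suc (l k), Suc (k - r k)) \<in> dom"
proof -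
  assume a: "k \<le> H" "r k = Suc (l k)"
  note el = eye_level[OF a]
  have "l (Suc k) \<le> Suc (l k)" using ls[of k] by auto
  moreover have "r k \<le> r (Suc k)" using rs[of k] by auto
  moreover have "Suc (l k) + Suc (k - r k) = Suc k" using a el by simp
  ultimately show ?thesis unfolding dom_def using a el by simp
qed

lemma S_cases:
  assumes "u \<in> S"
  obtains (grid) x y where "u = (x, y, 0)" "(x, y) \<in> dom"
    | (eye) k t where "u = (l k, k - r k, t)" "k \<le> H" "r k = Suc (l k)" "1 \<le> t" "t \<le> e k"
  using assms unfolding S_def by blast

lemma lo_hi_dom:
  assumes "(x, y, t) \<in> S"
  shows "(x, y) \<in> dom \<and> (x + ind t, y + ind t) \<in> dom"
  using assms
proof (cases rule: S_cases)
  case grid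
  then show ?thesis by (auto simp: ind_def)
next
  case (eye k t')
  then show ?thesis using eye_lo[of k] eye_hi[of k] by (auto simp: ind_def)
qed

lemma grid_in_S: "(x, y) \<in> dom \<Longrightarrow> (x, y, 0) \<in> S"
  unfolding S_def by blast

lemma vlat_S: "vlat S gle gjn gmt gh"
proof (unfold_locales, goal_cases)
  case 1
  have "(0, 0) \<in> dom" unfolding dom_def using l0 r0 by simp
  then show ?case using grid_in_S by blast
next
  case (5 u v)
  obtain x y t where u: "u = (x, y, t)" by (cases u) auto
  obtain x' y' t' where v: "v = (x', y', t')" by (cases v) auto
  have "(max (x + ind t) (x' + ind t'), max (y + ind t) (y' + ind t')) \<in> dom"
    using dom_max lo_hi_dom 5 u v by blast
  then show ?case using 5 u v grid_in_S by simp
next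
  case (9 u v)
  obtain x y t where u: "u = (x, y, t)" by (cases u) auto
  obtain x' y' t' where v: "v = (x', y', t')" by (cases v) auto
  have "(min x x', min y y') \<in> dom"
    using dom_min lo_hi_dom 9 u v by blast
  then show ?case using 9 u v grid_in_S by simp
next
  case (2 x) show ?case by (rule gle_refl)
next
  case (3 x y) then show ?case using gle_antisym by blast
next
  case (4 x y z) then show ?case using gle_trans by blast
next
  case (6 x y) show ?case by (rule gjn1)
next
  case (7 x y) show ?case by (rule gjn2)
next
  case (8 x y z) then show ?case using gjn3 by blast
next
  case (10 x y) show ?case by (rule gmt1)
next
  case (11 x y) show ?case by (rule gmt2)
next
  case (12 x y z) then show ?case using gmt3 by blast
next
  case (13 x y) then show ?case using gh_strict by blast
next
  case (14 x y) show ?case by (rule gh_val)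
qed

lemma level_S:
  assumes "u \<in> S" "gh u = k"
  shows "k \<le> H \<and> (u = (r k, k - r k, 0) \<or> u = (l k, k - l k, 0) \<or>
           (\<exists>t. u = (l k, k - r k, t) \<and> r k = Suc (l k) \<and> 1 \<le> t \<and> t \<le> e k))"
  using assms(1)
proof (cases rule: S_cases)
  case (grid x y)
  then have "x + y = k" "l k \<le> x" "x \<le> r k" "k \<le> H" using assms(2) unfolding dom_def by auto
  moreover have "r k \<le> Suc (l k)" by (rule rl)
  ultimately show ?thesis using grid by (cases "x = r k") auto
next
  case (eye k' t)
  note el = eye_level[OF eye(2,3)]
  have "gh u = k'" using eye el by (simp add: ind_def)
  then show ?thesis using eye assms(2) by auto
qed

lemma lev_all:
  assumes "v \<in> S" "gh v = m"
    and "P (r m, m - r m, 0)" "P (l m, m - l m, 0)"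
    and "\<And>t. r m = Suc (l m) \<Longrightarrow> 1 \<le> t \<Longrightarrow> t \<le> e m \<Longrightarrow> P (l m, m - r m, t)"
  shows "P v"
  using level_S[OF assms(1,2)] assms(3-5) by auto

lemma gridR_S: "k \<le> H \<Longrightarrow> (r k, k - r k, 0) \<in> S"
  using grid_in_S[of "r k" "k - r k"] r_le[of k] lr[of k] unfolding dom_def by simp

lemma gridL_S: "k \<le> H \<Longrightarrow> (l k, k - l k, 0) \<in> S"
  using grid_in_S[of "l k" "k - l k"] l_le[of k] lr[of k] unfolding dom_def by simp

lemma eye_S: "k \<le> H \<Longrightarrow> r k = Suc (l k) \<Longrightarrow> 1 \<le> t \<Longrightarrow> t \<le> e k \<Longrightarrow> (l k, k - r k, t) \<in> S"
  unfolding S_def by blast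

lemma gh_R: "gh (r k, k - r k, 0) = k" using r_le[of k] by (simp add: ind_def)
lemma gh_L: "gh (l k, k - l k, 0) = k" using l_le[of k] by (simp add: ind_def)
lemma gh_E: "r k = Suc (l k) \<Longrightarrow> 1 \<le> t \<Longrightarrow> gh (l k, k - r k, t) = k"
  using r_le[of k] by (simp add: ind_def)

lemma S_level_le: "u \<in> S \<Longrightarrow> gh u \<le> H"
  using level_S by blast

lemma lower_nb:
  assumes "u \<in> S" "0 < gh u"
  shows "\<exists>v\<in>S. gle v u \<and> v \<noteq> u \<and> Suc (gh v) = gh u"
  using assms(1)
proof (cases rule: S_cases)
  case (grid x y)
  then have d: "x + y \<le> H" "l (x + y) \<le> x" "x \<le> r (x + y)" unfolding dom_def by auto
  obtain j where j: "x + y = Suc j" using assms(2) grid by (cases "x + y") (auto simp: ind_def)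
  have rj: "r (Suc j) \<le> Suc (r j)" using rs[of j] by auto
  have lj: "l j \<le> l (Suc j)" using ls[of j] by auto
  have rjj: "r j \<le> j" by (rule r_le)
  show ?thesis
  proof (cases "x \<le> r j")
    case True
    then have y1: "1 \<le> y" using j rjj by linarith
    have "(x, y - 1) \<in> dom" unfolding dom_def using True j d lj y1 by auto
    then show ?thesis using grid y1 j grid_in_S by (intro bexI[of _ "(x, y - 1, 0)"]) (auto simp: ind_def)
  next
    case False
    have "x \<le> r (Suc j)" using d j by simp
    then have x1: "x = Suc (r j)" using rj False by linarith
    have "(x - 1, y) \<in> dom" unfolding dom_def using x1 j d lr[of j] by auto
    then show ?thesis using grid x1 j grid_in_S by (intro bexI[of _ "(x - 1, y, 0)"]) (auto simp: ind_def)
  qed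
next
  case (eye k t)
  have "(l k, k - r k) \<in> dom" using eye_lo eye by blast
  then show ?thesis using eye grid_in_S r_le[of k] by (intro bexI[of _ "(l k, k - r k, 0)"]) (auto simp: ind_def)
qed

lemma lev_eq:
  assumes "k \<le> H"
  shows "{u \<in> S. gh u = k} = {(r k, k - r k, 0), (l k, k - l k, 0)} \<union>
           (\<lambda>t. (l k, k - r k, t)) ` {t. 1 \<le> t \<and> t \<le> e k \<and> r k = Suc (l k)}"
proof
  show "{u \<in> S. gh u = k} \<subseteq> {(r k, k - r k, 0), (l k, k - l k, 0)} \<union>
           (\<lambda>t. (l k, k - r k, t)) ` {t. 1 \<le> t \<and> t \<le> e k \<and> r k = Suc (l k)}"
    using level_S by fastforce
  show "{(r k, k - r k, 0), (l k, k - l k, 0)} \<union>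
           (\<lambda>t. (l k, k - r k, t)) ` {t. 1 \<le> t \<and> t \<le> e k \<and> r k = Suc (l k)} \<subseteq> {u \<in> S. gh u = k}"
    using gridR_S[OF assms] gridL_S[OF assms] eye_S[OF assms] gh_R gh_L gh_E by auto
qed

lemma card_lev:
  assumes "k \<le> H"
  shows "card {u \<in> S. gh u = k} = (if r k = l k then 1 else 2 + e k)"
proof (cases "r k = l k")
  case True
  then have "{u \<in> S. gh u = k} = {(r k, k - r k, 0)}" using lev_eq[OF assms] by auto
  then show ?thesis using True by simp
next
  case False
  then have w: "r k = Suc (l k)" using lr[of k] rl[of k] by linarith
  have e: "{t. 1 \<le> t \<and> t \<le> e k \<and> r k = Suc (l k)} = {1..e k}" using w by auto
  have c1: "card ((\<lambda>t. (l k, k - r k, t)) ` {1..e k}) = e k"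
    by (subst card_image) (auto simp: inj_on_def)
  have c2: "card {(r k, k - r k, 0), (l k, k - l k, 0)} = 2" using w by auto
  have d: "{(r k, k - r k, 0), (l k, k - l k, 0)} \<inter> (\<lambda>t. (l k, k - r k, t)) ` {1..e k} = {}" by auto
  have "card {u \<in> S. gh u = k} = 2 + e k"
    unfolding lev_eq[OF assms] e using card_Un_disjoint[OF _ _ d] c1 c2 by simp
  then show ?thesis using False by simp
qed

lemma turn:
  assumes H2: "Suc (Suc j) \<le> H" and w0: "r j = Suc (l j)" and w1: "r (Suc j) = Suc (l (Suc j))"
    and w2: "r (Suc (Suc j)) = Suc (l (Suc (Suc j)))"
  shows "Pv S gle gh (Suc j) \<longleftrightarrow> r (Suc (Suc j)) + r j \<noteq> r (Suc j) + r (Suc j)"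
proof -
  have ab: "r (Suc j) = r j \<or> r (Suc j) = Suc (r j)" using rs[of j] by auto
  have bc: "r (Suc (Suc j)) = r (Suc j) \<or> r (Suc (Suc j)) = Suc (r (Suc j))" using rs[of "Suc j"] by auto
  have aj: "r j \<le> j" "r (Suc j) \<le> Suc j" "r (Suc (Suc j)) \<le> Suc (Suc j)" using r_le by auto
  have la: "l j = r j - 1" "1 \<le> r j" using w0 by auto
  have lb: "l (Suc j) = r (Suc j) - 1" using w1 by auto
  have lc: "l (Suc (Suc j)) = r (Suc (Suc j)) - 1" using w2 by auto
  have Hs: "j \<le> H" "Suc j \<le> H" using H2 by auto
  note mem = gridR_S[OF Hs(1)] gridL_S[OF Hs(1)] gridR_S[OF Hs(2)] gridL_S[OF Hs(2)]
    gridR_S[OF H2] gridL_S[OF H2]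
  note ghs = gh_R[of j] gh_L[of j] gh_R[of "Suc j"] gh_L[of "Suc j"] gh_R[of "Suc (Suc j)"] gh_L[of "Suc (Suc j)"]
  show ?thesis
  proof
    assume P: "Pv S gle gh (Suc j)"
    show "r (Suc (Suc j)) + r j \<noteq> r (Suc j) + r (Suc j)"
    proof
      assume st: "r (Suc (Suc j)) + r j = r (Suc j) + r (Suc j)"
      from P obtain u v1 v2 z1 z2 where u: "u \<in> S" "gh u = Suc j"
        and v: "v1 \<in> S" "v2 \<in> S" "v1 \<noteq> v2" "gle v1 u" "gle v2 u" "Suc (gh v1) = Suc j" "Suc (gh v2) = Suc j"
        and z: "z1 \<in> S" "z2 \<in> S" "z1 \<noteq> z2" "gle u z1" "gle u z2" "gh z1 = Suc (Suc j)" "gh z2 = Suc (Suc j)"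
        unfolding Pv_def by blast
      have vj: "gh v1 = j" "gh v2 = j" using v by auto
      have ucases: "u = (r (Suc j), Suc j - r (Suc j), 0) \<or> u = (l (Suc j), Suc j - l (Suc j), 0) \<or>
           (\<exists>t. u = (l (Suc j), Suc j - r (Suc j), t) \<and> 1 \<le> t)"
        using level_S[OF u] by blast
      have v1c: "v1 = (r j, j - r j, 0) \<or> v1 = (l j, j - l j, 0) \<or> (\<exists>t. v1 = (l j, j - r j, t) \<and> 1 \<le> t)"
        using level_S[OF v(1) vj(1)] by blast
      have v2c: "v2 = (r j, j - r j, 0) \<or> v2 = (l j, j - l j, 0) \<or> (\<exists>t. v2 = (l j, j - r j, t) \<and> 1 \<le> t)"
        using level_S[OF v(2) vj(2)] by blast
      have z1c: "z1 = (r (Suc (Suc j)), Suc (Suc j) - r (Suc (Suc j)), 0) \<or> z1 = (l (Suc (Suc j)), Suc (Suc j) - l (Suc (Suc j)), 0) \<or>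
           (\<exists>t. z1 = (l (Suc (Suc j)), Suc (Suc j) - r (Suc (Suc j)), t) \<and> 1 \<le> t)"
        using level_S[OF z(1) z(6)] by blast
      have z2c: "z2 = (r (Suc (Suc j)), Suc (Suc j) - r (Suc (Suc j)), 0) \<or> z2 = (l (Suc (Suc j)), Suc (Suc j) - l (Suc (Suc j)), 0) \<or>
           (\<exists>t. z2 = (l (Suc (Suc j)), Suc (Suc j) - r (Suc (Suc j)), t) \<and> 1 \<le> t)"
        using level_S[OF z(2) z(7)] by blast
      consider (RR) "r (Suc j) = Suc (r j)" "r (Suc (Suc j)) = Suc (Suc (r j))"
        | (UU) "r (Suc j) = r j" "r (Suc (Suc j)) = r j" using ab bc st by auto
      then show False
      proof cases
        case RR
        note F = RR aj la lb lc
        from ucases show False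
        proof (elim disjE exE conjE)
          assume uu: "u = (r (Suc j), Suc j - r (Suc j), 0)"
          have "v1 = (r j, j - r j, 0)" using v1c v(4) uu F by auto
          moreover have "v2 = (r j, j - r j, 0)" using v2c v(5) uu F by auto
          ultimately show False using v(3) by simp
        next
          assume uu: "u = (l (Suc j), Suc j - l (Suc j), 0)"
          have "z1 = (l (Suc (Suc j)), Suc (Suc j) - l (Suc (Suc j)), 0)" using z1c z(4) uu F by auto
          moreover have "z2 = (l (Suc (Suc j)), Suc (Suc j) - l (Suc (Suc j)), 0)" using z2c z(5) uu F by auto
          ultimately show False using z(3) by simp
        next
          fix t assume uu: "u = (l (Suc j), Suc j - r (Suc j), t)" "1 \<le> t"
          have "v1 = (r j, j - r j, 0)" using v1c v(4) uu F by auto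
          moreover have "v2 = (r j, j - r j, 0)" using v2c v(5) uu F by auto
          ultimately show False using v(3) by simp
        qed
      next
        case UU
        note F = UU aj la lb lc
        from ucases show False
        proof (elim disjE exE conjE)
          assume uu: "u = (r (Suc j), Suc j - r (Suc j), 0)"
          have "z1 = (r (Suc (Suc j)), Suc (Suc j) - r (Suc (Suc j)), 0)" using z1c z(4) uu F by auto
          moreover have "z2 = (r (Suc (Suc j)), Suc (Suc j) - r (Suc (Suc j)), 0)" using z2c z(5) uu F by auto
          ultimately show False using z(3) by simp
        next
          assume uu: "u = (l (Suc j), Suc j - l (Suc j), 0)"
          have "v1 = (l j, j - l j, 0)" using v1c v(4) uu F by auto
          moreover have "v2 = (l j, j - l j, 0)" using v2c v(5) uu F by auto
          ultimately show False using v(3) by simp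
        next
          fix t assume uu: "u = (l (Suc j), Suc j - r (Suc j), t)" "1 \<le> t"
          have "v1 = (l j, j - l j, 0)" using v1c v(4) uu F by auto
          moreover have "v2 = (l j, j - l j, 0)" using v2c v(5) uu F by auto
          ultimately show False using v(3) by simp
        qed
      qed
    qed
  next
    assume tc: "r (Suc (Suc j)) + r j \<noteq> r (Suc j) + r (Suc j)"
    consider (RU) "r (Suc j) = Suc (r j)" "r (Suc (Suc j)) = Suc (r j)"
      | (UR) "r (Suc j) = r j" "r (Suc (Suc j)) = Suc (r j)" using ab bc tc by auto
    then show "Pv S gle gh (Suc j)"
    proof cases
      case RU
      note F = RU aj la lb lc
      have uS: "(l (Suc j), Suc j - l (Suc j), 0) \<in> S" "gh (l (Suc j), Suc j - l (Suc j), 0) = Suc j" using mem ghs by auto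
      have A: "\<exists>v1\<in>S. \<exists>v2\<in>S. v1 \<noteq> v2 \<and> gle v1 (l (Suc j), Suc j - l (Suc j), 0) \<and> gle v2 (l (Suc j), Suc j - l (Suc j), 0) \<and> Suc (gh v1) = Suc j \<and> Suc (gh v2) = Suc j"
      proof (rule bexI[of _ "(r j, j - r j, 0)"], rule bexI[of _ "(l j, j - l j, 0)"])
        show "(r j, j - r j, 0) \<noteq> (l j, j - l j, 0) \<and> gle (r j, j - r j, 0) (l (Suc j), Suc j - l (Suc j), 0) \<and> gle (l j, j - l j, 0) (l (Suc j), Suc j - l (Suc j), 0) \<and>
          Suc (gh (r j, j - r j, 0)) = Suc j \<and> Suc (gh (l j, j - l j, 0)) = Suc j"
          using F ghs by auto
      qed (use mem in auto)
      have B: "\<exists>z1\<in>S. \<exists>z2\<in>S. z1 \<noteq> z2 \<and> gle (l (Suc j), Suc j - l (Suc j), 0) z1 \<and> gle (l (Suc j), Suc j - l (Suc j), 0) z2 \<and> gh z1 = Suc (Suc j) \<and> gh z2 = Suc (Suc j)"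
      proof (rule bexI[of _ "(r (Suc (Suc j)), Suc (Suc j) - r (Suc (Suc j)), 0)"],
             rule bexI[of _ "(l (Suc (Suc j)), Suc (Suc j) - l (Suc (Suc j)), 0)"])
        show "(r (Suc (Suc j)), Suc (Suc j) - r (Suc (Suc j)), 0) \<noteq> (l (Suc (Suc j)), Suc (Suc j) - l (Suc (Suc j)), 0) \<and>
          gle (l (Suc j), Suc j - l (Suc j), 0) (r (Suc (Suc j)), Suc (Suc j) - r (Suc (Suc j)), 0) \<and>
          gle (l (Suc j), Suc j - l (Suc j), 0) (l (Suc (Suc j)), Suc (Suc j) - l (Suc (Suc j)), 0) \<and>
          gh (r (Suc (Suc j)), Suc (Suc j) - r (Suc (Suc j)), 0) = Suc (Suc j) \<and>
          gh (l (Suc (Suc j)), Suc (Suc j) - l (Suc (Suc j)), 0) = Suc (Suc j)"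
          using F ghs by auto
      qed (use mem in auto)
      show ?thesis unfolding Pv_def using uS A B by blast
    next
      case UR
      note F = UR aj la lb lc
      have uS: "(r (Suc j), Suc j - r (Suc j), 0) \<in> S" "gh (r (Suc j), Suc j - r (Suc j), 0) = Suc j" using mem ghs by auto
      have A: "\<exists>v1\<in>S. \<exists>v2\<in>S. v1 \<noteq> v2 \<and> gle v1 (r (Suc j), Suc j - r (Suc j), 0) \<and> gle v2 (r (Suc j), Suc j - r (Suc j), 0) \<and> Suc (gh v1) = Suc j \<and> Suc (gh v2) = Suc j"
      proof (rule bexI[of _ "(r j, j - r j, 0)"], rule bexI[of _ "(l j, j - l j, 0)"])
        show "(r j, j - r j, 0) \<noteq> (l j, j - l j, 0) \<and> gle (r j, j - r j, 0) (r (Suc j), Suc j - r (Suc j), 0) \<and> gle (l j, j - l j, 0) (r (Suc j), Suc j - r (Suc j), 0) \<and>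
          Suc (gh (r j, j - r j, 0)) = Suc j \<and> Suc (gh (l j, j - l j, 0)) = Suc j"
          using F ghs by auto
      qed (use mem in auto)
      have B: "\<exists>z1\<in>S. \<exists>z2\<in>S. z1 \<noteq> z2 \<and> gle (r (Suc j), Suc j - r (Suc j), 0) z1 \<and> gle (r (Suc j), Suc j - r (Suc j), 0) z2 \<and> gh z1 = Suc (Suc j) \<and> gh z2 = Suc (Suc j)"
      proof (rule bexI[of _ "(r (Suc (Suc j)), Suc (Suc j) - r (Suc (Suc j)), 0)"],
             rule bexI[of _ "(l (Suc (Suc j)), Suc (Suc j) - l (Suc (Suc j)), 0)"])
        show "(r (Suc (Suc j)), Suc (Suc j) - r (Suc (Suc j)), 0) \<noteq> (l (Suc (Suc j)), Suc (Suc j) - l (Suc (Suc j)), 0) \<and>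
          gle (r (Suc j), Suc j - r (Suc j), 0) (r (Suc (Suc j)), Suc (Suc j) - r (Suc (Suc j)), 0) \<and>
          gle (r (Suc j), Suc j - r (Suc j), 0) (l (Suc (Suc j)), Suc (Suc j) - l (Suc (Suc j)), 0) \<and>
          gh (r (Suc (Suc j)), Suc (Suc j) - r (Suc (Suc j)), 0) = Suc (Suc j) \<and>
          gh (l (Suc (Suc j)), Suc (Suc j) - l (Suc (Suc j)), 0) = Suc (Suc j)"
          using F ghs by auto
      qed (use mem in auto)
      show ?thesis unfolding Pv_def using uS A B by blast
    qed
  qed
qed

lemma lev_finite: "k \<le> H \<Longrightarrow> finite {u \<in> S. gh u = k}"
  using lev_eq[of k] by simp

lemma S_union: "S = (\<Union>k\<in>{..H}. {u \<in> S. gh u = k})"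
  using S_level_le by auto

lemma finite_S: "finite S"
  by (subst S_union) (auto intro: lev_finite)

lemma card_S: "card S = (\<Sum>k\<le>H. (if r k = l k then 1 else 2 + e k))"
proof -
  have "card S = (\<Sum>k\<in>{..H}. card {u \<in> S. gh u = k})"
    by (subst S_union, rule card_UN_disjoint) (auto intro: lev_finite)
  also have "\<dots> = (\<Sum>k\<le>H. (if r k = l k then 1 else 2 + e k))"
    by (rule sum.cong) (auto simp: card_lev)
  finally show ?thesis .
qed

end


lemma h_ge:
  assumes bij: "bij_betw \<phi> X Y"
    and ord: "\<And>u v. u \<in> X \<Longrightarrow> v \<in> X \<Longrightarrow> lx u v \<Longrightarrow> ly (\<phi> u) (\<phi> v)"
    and str2: "\<And>x y. x \<in> Y \<Longrightarrow> y \<in> Y \<Longrightarrow> ly x y \<Longrightarrow> x \<noteq> y \<Longrightarrow> hy x < hy y"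
    and nb1: "\<And>u. u \<in> X \<Longrightarrow> 0 < hx u \<Longrightarrow> \<exists>v\<in>X. lx v u \<and> v \<noteq> u \<and> Suc (hx v) = hx u"
  shows "u \<in> X \<Longrightarrow> hx u \<le> hy (\<phi> u)"
proof (induction "hx u" arbitrary: u rule: less_induct)
  case less
  show ?case
  proof (cases "hx u = 0")
    case True then show ?thesis by simp
  next
    case False
    then obtain v where v: "v \<in> X" "lx v u" "v \<noteq> u" "Suc (hx v) = hx u"
      using nb1[OF less.prems] by auto
    have "hx v \<le> hy (\<phi> v)" using less.hyps[of v] v by simp
    moreover have "\<phi> v \<noteq> \<phi> u" using bij v(1,3) less.prems unfolding bij_betw_def inj_on_def by blast
    moreover have "\<phi> v \<in> Y" "\<phi> u \<in> Y" using bij v(1) less.prems bij_betwE by blast+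
    ultimately have "hy (\<phi> v) < hy (\<phi> u)" using str2 ord[OF v(1) less.prems v(2)] by blast
    then show ?thesis using v(4) \<open>hx v \<le> hy (\<phi> v)\<close> by linarith
  qed
qed

locale giso =
  fixes A1 :: "'a set" and le1 :: "'a \<Rightarrow> 'a \<Rightarrow> bool" and h1 :: "'a \<Rightarrow> nat"
    and A2 :: "'b set" and le2 :: "'b \<Rightarrow> 'b \<Rightarrow> bool" and h2 :: "'b \<Rightarrow> nat"
    and \<phi> :: "'a \<Rightarrow> 'b"
  assumes bij: "bij_betw \<phi> A1 A2"
    and ord: "\<And>u v. u \<in> A1 \<Longrightarrow> v \<in> A1 \<Longrightarrow> le1 u v \<longleftrightarrow> le2 (\<phi> u) (\<phi> v)"
    and str1: "\<And>x y. x \<in> A1 \<Longrightarrow> y \<in> A1 \<Longrightarrow> le1 x y \<Longrightarrow> x \<noteq> y \<Longrightarrow> h1 x < h1 y"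
    and str2: "\<And>x y. x \<in> A2 \<Longrightarrow> y \<in> A2 \<Longrightarrow> le2 x y \<Longrightarrow> x \<noteq> y \<Longrightarrow> h2 x < h2 y"
    and nb1: "\<And>u. u \<in> A1 \<Longrightarrow> 0 < h1 u \<Longrightarrow> \<exists>v\<in>A1. le1 v u \<and> v \<noteq> u \<and> Suc (h1 v) = h1 u"
    and nb2: "\<And>u. u \<in> A2 \<Longrightarrow> 0 < h2 u \<Longrightarrow> \<exists>v\<in>A2. le2 v u \<and> v \<noteq> u \<and> Suc (h2 v) = h2 u"
begin

definition \<psi> where "\<psi> = inv_into A1 \<phi>"

lemma bij_psi: "bij_betw \<psi> A2 A1"
  unfolding \<psi>_def by (rule bij_betw_inv_into[OF bij])

lemma psi_phi: "u \<in> A1 \<Longrightarrow> \<psi> (\<phi> u) = u"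
  unfolding \<psi>_def using bij by (rule bij_betw_inv_into_left)

lemma phi_psi: "x \<in> A2 \<Longrightarrow> \<phi> (\<psi> x) = x"
  unfolding \<psi>_def using bij by (rule bij_betw_inv_into_right)

lemma phi_in: "u \<in> A1 \<Longrightarrow> \<phi> u \<in> A2" using bij bij_betwE by blast
lemma psi_in: "x \<in> A2 \<Longrightarrow> \<psi> x \<in> A1" using bij_psi bij_betwE by blast

lemma ord_psi: "x \<in> A2 \<Longrightarrow> y \<in> A2 \<Longrightarrow> le2 x y \<Longrightarrow> le1 (\<psi> x) (\<psi> y)"
  using ord[OF psi_in psi_in] phi_psi by simp

lemma h_eq: "u \<in> A1 \<Longrightarrow> h2 (\<phi> u) = h1 u"
proof -
  assume u: "u \<in> A1"
  have ordf: "\<And>u v. u \<in> A1 \<Longrightarrow> v \<in> A1 \<Longrightarrow> le1 u v \<Longrightarrow> le2 (\<phi> u) (\<phi> v)" using ord by blast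
  have a: "h1 u \<le> h2 (\<phi> u)"
    by (rule h_ge[where \<phi>=\<phi> and X=A1 and Y=A2 and lx=le1 and ly=le2 and hx=h1 and hy=h2, OF bij ordf str2 nb1 u])
  have b: "h2 (\<phi> u) \<le> h1 (\<psi> (\<phi> u))"
    by (rule h_ge[where \<phi>=\<psi> and X=A2 and Y=A1 and lx=le2 and ly=le1 and hx=h2 and hy=h1, OF bij_psi ord_psi str1 nb2 phi_in[OF u]])
  show ?thesis using a b psi_phi[OF u] by simp
qed

lemma Nv_eq: "Nv A2 h2 k = Nv A1 h1 k"
proof -
  have "{x \<in> A2. h2 x = k} = \<phi> ` {u \<in> A1. h1 u = k}"
  proof
    show "{x \<in> A2. h2 x = k} \<subseteq> \<phi> ` {u \<in> A1. h1 u = k}"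
    proof
      fix x assume "x \<in> {x \<in> A2. h2 x = k}"
      then have x: "x \<in> A2" "h2 x = k" by auto
      have "h1 (\<psi> x) = k" using h_eq[OF psi_in[OF x(1)]] phi_psi[OF x(1)] x(2) by simp
      then show "x \<in> \<phi> ` {u \<in> A1. h1 u = k}" using psi_in[OF x(1)] phi_psi[OF x(1)] by force
    qed
    show "\<phi> ` {u \<in> A1. h1 u = k} \<subseteq> {x \<in> A2. h2 x = k}" using phi_in h_eq by auto
  qed
  moreover have "inj_on \<phi> {u \<in> A1. h1 u = k}" using bij unfolding bij_betw_def inj_on_def by blast
  ultimately show ?thesis unfolding Nv_def by (simp add: card_image)
qed

lemma Pv_12: "Pv A1 le1 h1 k \<Longrightarrow> Pv A2 le2 h2 k"
proof -
  assume "Pv A1 le1 h1 k"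
  then obtain u v1 v2 z1 z2 where u: "u \<in> A1" "h1 u = k"
    and v: "v1 \<in> A1" "v2 \<in> A1" "v1 \<noteq> v2" "le1 v1 u" "le1 v2 u" "Suc (h1 v1) = k" "Suc (h1 v2) = k"
    and z: "z1 \<in> A1" "z2 \<in> A1" "z1 \<noteq> z2" "le1 u z1" "le1 u z2" "h1 z1 = Suc k" "h1 z2 = Suc k"
    unfolding Pv_def by blast
  have inj: "\<And>a b. a \<in> A1 \<Longrightarrow> b \<in> A1 \<Longrightarrow> a \<noteq> b \<Longrightarrow> \<phi> a \<noteq> \<phi> b"
    using bij unfolding bij_betw_def inj_on_def by blast
  show "Pv A2 le2 h2 k" unfolding Pv_def
    apply (rule bexI[of _ "\<phi> u"])
     apply (intro conjI)
       apply (simp add: h_eq u)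
      apply (rule bexI[of _ "\<phi> v1"], rule bexI[of _ "\<phi> v2"])
        apply (use v u inj ord h_eq in simp)
       apply (use phi_in v u in auto)[2]
     apply (rule bexI[of _ "\<phi> z1"], rule bexI[of _ "\<phi> z2"])
       apply (use z u inj ord h_eq in simp)
      apply (use phi_in z u in auto)
    done
qed

end

lemma giso_sym:
  assumes "giso A1 le1 h1 A2 le2 h2 \<phi>"
  shows "giso A2 le2 h2 A1 le1 h1 (inv_into A1 \<phi>)"
proof -
  interpret giso A1 le1 h1 A2 le2 h2 \<phi> by (rule assms)
  show ?thesis
  proof
    show "bij_betw (inv_into A1 \<phi>) A2 A1" using bij_psi \<psi>_def by simp
    show "\<And>u v. u \<in> A2 \<Longrightarrow> v \<in> A2 \<Longrightarrow> le2 u v \<longleftrightarrow> le1 (inv_into A1 \<phi> u) (inv_into A1 \<phi> v)"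
      using ord[OF psi_in psi_in] phi_psi \<psi>_def by simp
  qed (use str1 str2 nb1 nb2 in auto)
qed

lemma giso_inv:
  assumes "giso A1 le1 h1 A2 le2 h2 \<phi>"
  shows "Nv A1 h1 k = Nv A2 h2 k \<and> (Pv A1 le1 h1 k \<longleftrightarrow> Pv A2 le2 h2 k)"
proof -
  interpret g1: giso A1 le1 h1 A2 le2 h2 \<phi> by (rule assms)
  interpret g2: giso A2 le2 h2 A1 le1 h1 "inv_into A1 \<phi>" by (rule giso_sym[OF assms])
  show ?thesis using g1.Nv_eq g1.Pv_12 g2.Pv_12 by auto
qed


datatype kd = KE | KO | KR | KU | KK
type_synonym ent = "kd \<times> nat"
datatype st = S1 | S2a | S2b

fun okk :: "st \<Rightarrow> kd \<Rightarrow> bool" where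
  "okk S1 KE = True" | "okk S1 KO = True"
| "okk S2a KR = True" | "okk S2a KK = True"
| "okk S2b KR = True" | "okk S2b KU = True" | "okk S2b KK = True"
| "okk _ _ = False"

fun wide :: "kd \<Rightarrow> bool" where
  "wide KE = False" | "wide KO = True" | "wide KR = True" | "wide KU = True" | "wide KK = False"

fun ok :: "st \<Rightarrow> ent \<Rightarrow> bool" where
  "ok s (k, e) \<longleftrightarrow> okk s k \<and> (if wide k then e \<le> 5 else e = 0)"

fun nx :: "st \<Rightarrow> kd \<Rightarrow> st" where
  "nx _ KE = S1" | "nx _ KO = S2a" | "nx _ KR = S2b" | "nx _ KU = S2b" | "nx _ KK = S1"

fun run :: "st \<Rightarrow> ent list \<Rightarrow> st option" where
  "run s [] = Some s"
| "run s (a # c) = (if ok s a then run (nx s (fst a)) c else None)"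

fun wt :: "ent \<Rightarrow> nat" where
  "wt (k, e) = (if wide k then 2 + e else 1)"

definition weight :: "ent list \<Rightarrow> nat" where
  "weight c = sum_list (map wt c)"

fun dr :: "kd \<Rightarrow> nat" where
  "dr KE = 1" | "dr KO = 1" | "dr KR = 1" | "dr KU = 0" | "dr KK = 0"

fun dl :: "kd \<Rightarrow> nat" where
  "dl KE = 1" | "dl KO = 0" | "dl KR = 1" | "dl KU = 0" | "dl KK = 1"

fun wd :: "st \<Rightarrow> nat" where
  "wd S1 = 0" | "wd S2a = 1" | "wd S2b = 1"

definition rsum :: "ent list \<Rightarrow> nat" where "rsum p = sum_list (map (dr \<circ> fst) p)"
definition lsum :: "ent list \<Rightarrow> nat" where "lsum p = sum_list (map (dl \<circ> fst) p)"

definition rr :: "ent list \<Rightarrow> nat \<Rightarrow> nat" where "rr c j = rsum (take j c)"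
definition ll :: "ent list \<Rightarrow> nat \<Rightarrow> nat" where "ll c j = lsum (take j c)"
definition ee :: "ent list \<Rightarrow> nat \<Rightarrow> nat" where
  "ee c j = (if 0 < j \<and> j \<le> length c then snd (c ! (j - 1)) else 0)"

definition valid :: "ent list \<Rightarrow> bool" where "valid c \<longleftrightarrow> run S1 c = Some S1"

lemma run_append: "run s (p @ q) = (case run s p of None \<Rightarrow> None | Some s' \<Rightarrow> run s' q)"
  by (induction p arbitrary: s) auto

lemma run_snoc: "run s (p @ [a]) = Some t \<Longrightarrow> \<exists>s'. run s p = Some s' \<and> ok s' a \<and> t = nx s' (fst a)"
  by (auto simp: run_append split: option.splits if_splits)

lemma run_prefix: "run s (p @ q) = Some t \<Longrightarrow> \<exists>s'. run s p = Some s'"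
  by (auto simp: run_append split: option.splits)

lemma step_wd: "ok s a \<Longrightarrow> wd (nx s (fst a)) + lsum [a] = wd s + rsum [a]"
  by (cases a; cases s; cases "fst a") (auto simp: rsum_def lsum_def)

lemma step_wide: "ok s a \<Longrightarrow> wd (nx s (fst a)) = (if wide (fst a) then 1 else 0)"
  by (cases a; cases s; cases "fst a") auto

lemma width_inv: "run S1 p = Some s \<Longrightarrow> rsum p = lsum p + wd s"
proof (induction p arbitrary: s rule: rev_induct)
  case Nil then show ?case by (simp add: rsum_def lsum_def)
next
  case (snoc a p)
  obtain s' where s': "run S1 p = Some s'" "ok s' a" "s = nx s' (fst a)"
    using run_snoc[OF snoc.prems] by blast
  have "rsum p = lsum p + wd s'" using snoc.IH s'(1) by simp
  moreover have "rsum (p @ [a]) = rsum p + rsum [a]" "lsum (p @ [a]) = lsum p + lsum [a]"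
    by (simp_all add: rsum_def lsum_def)
  moreover have "wd s + lsum [a] = wd s' + rsum [a]" using step_wd[OF s'(2)] s'(3) by simp
  ultimately show ?case by linarith
qed

lemma wd_le: "wd s \<le> 1" by (cases s) auto

lemma dr_le: "dr k \<le> 1" by (cases k) auto
lemma dl_le: "dl k \<le> 1" by (cases k) auto

lemma take_Suc_snoc: "j < length c \<Longrightarrow> take (Suc j) c = take j c @ [c ! j]"
  by (simp add: take_Suc_conv_app_nth)

lemma rr_step: "rr c (Suc j) = rr c j \<or> rr c (Suc j) = Suc (rr c j)"
proof (cases "j < length c")
  case True
  then show ?thesis using dr_le[of "fst (c ! j)"] unfolding rr_def rsum_def
    by (auto simp: take_Suc_snoc)
next
  case False then show ?thesis unfolding rr_def by simp
qed

lemma ll_step: "ll c (Suc j) = ll c j \<or> ll c (Suc j) = Suc (ll c j)"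
proof (cases "j < length c")
  case True
  then show ?thesis using dl_le[of "fst (c ! j)"] unfolding ll_def lsum_def
    by (auto simp: take_Suc_snoc)
next
  case False then show ?thesis unfolding ll_def by simp
qed

lemma valid_take: "valid c \<Longrightarrow> \<exists>s. run S1 (take j c) = Some s"
  unfolding valid_def using run_prefix[of S1 "take j c" "drop j c"] by simp

lemma rr_ll: "valid c \<Longrightarrow> \<exists>s. run S1 (take j c) = Some s \<and> rr c j = ll c j + wd s"
  using valid_take width_inv unfolding rr_def ll_def by blast

lemma shape_c: "valid c \<Longrightarrow> shape (length c) (ll c) (rr c)"
proof
  assume v: "valid c"
  show "ll c 0 = 0" "rr c 0 = 0" by (simp_all add: ll_def rr_def rsum_def lsum_def)
  show "ll c j \<le> rr c j" for j
  proof -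
    obtain s where "rr c j = ll c j + wd s" using rr_ll[OF v, of j] by blast
    then show ?thesis by simp
  qed
  show "rr c j \<le> Suc (ll c j)" for j
  proof -
    obtain s where "rr c j = ll c j + wd s" using rr_ll[OF v, of j] by blast
    then show ?thesis using wd_le[of s] by simp
  qed
  show "\<And>j. rr c (Suc j) = rr c j \<or> rr c (Suc j) = Suc (rr c j)" by (rule rr_step)
  show "\<And>j. ll c (Suc j) = ll c j \<or> ll c (Suc j) = Suc (ll c j)" by (rule ll_step)
  show "ll c (length c) = rr c (length c)"
    using width_inv[of c S1] v unfolding valid_def rr_def ll_def by simp
qed

definition Sc :: "ent list \<Rightarrow> el set" where
  "Sc c = shape.S (length c) (ll c) (rr c) (ee c)"

lemma level_term:
  assumes v: "valid c" and k: "k < length c"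
  shows "(if rr c (Suc k) = ll c (Suc k) then 1 else 2 + ee c (Suc k)) = wt (c ! k)"
proof -
  obtain t where t: "run S1 (take (Suc k) c) = Some t" using valid_take[OF v] by blast
  then obtain s where s: "run S1 (take k c) = Some s" "ok s (c ! k)" "t = nx s (fst (c ! k))"
    using run_snoc[of S1 "take k c" "c ! k" t] take_Suc_snoc[OF k] by auto
  have w: "rr c (Suc k) = ll c (Suc k) + wd t" using width_inv[OF t] unfolding rr_def ll_def by simp
  have wt: "wd t = (if wide (fst (c ! k)) then 1 else 0)" using step_wide[OF s(2)] s(3) by simp
  have e: "ee c (Suc k) = snd (c ! k)" using k unfolding ee_def by simp
  obtain kk ee' where ck: "c ! k = (kk, ee')" by (cases "c ! k")
  show ?thesis using w wt e ck s(2) by auto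
qed

lemma card_Sc: "valid c \<Longrightarrow> card (Sc c) = Suc (weight c)"
proof -
  assume v: "valid c"
  interpret shape "length c" "ll c" "rr c" "ee c" by (rule shape_c[OF v])
  have "card (Sc c) = (\<Sum>k\<le>length c. (if rr c k = ll c k then 1 else 2 + ee c k))"
    unfolding Sc_def by (rule card_S)
  also have "\<dots> = 1 + (\<Sum>k<length c. (if rr c (Suc k) = ll c (Suc k) then 1 else 2 + ee c (Suc k)))"
    unfolding lessThan_Suc_atMost[symmetric] sum.lessThan_Suc_shift
    by (simp add: rr_def ll_def rsum_def lsum_def)
  also have "\<dots> = 1 + (\<Sum>k<length c. wt (c ! k))"
    using level_term[OF v] by simp
  also have "\<dots> = Suc (weight c)"
    unfolding weight_def by (simp add: sum_list_sum_nth atLeast0LessThan)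
  finally show ?thesis by simp
qed

lemma Nv_c: "valid c \<Longrightarrow> k < length c \<Longrightarrow> Nv (Sc c) gh (Suc k) = wt (c ! k)"
proof -
  assume v: "valid c" and k: "k < length c"
  interpret shape "length c" "ll c" "rr c" "ee c" by (rule shape_c[OF v])
  show ?thesis unfolding Nv_def Sc_def using card_lev[of "Suc k"] k level_term[OF v k] by simp
qed

lemma run_valid_split: "valid (p @ a # q) \<Longrightarrow> \<exists>s. run S1 p = Some s \<and> ok s a"
  unfolding valid_def by (auto simp: run_append split: option.splits if_splits)

lemma okS2b: "ok s a \<Longrightarrow> nx s (fst a) = S2b \<Longrightarrow> (fst a = KR \<or> fst a = KU) \<and> (s = S2a \<or> s = S2b)"
  by (cases a; cases s; cases "fst a") auto

lemma Pv_c: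
  assumes v: "valid c" and c: "c = p @ a # q" and s: "run S1 p = Some S2b" and w: "wide (fst a)"
  shows "Pv (Sc c) gle gh (length p) \<longleftrightarrow> dr (fst a) \<noteq> dr (fst (last p))"
proof -
  interpret shape "length c" "ll c" "rr c" "ee c" by (rule shape_c[OF v])
  have pne: "p \<noteq> []" using s by auto
  then obtain p' b where pb: "p = p' @ [b]" by (cases p rule: rev_cases) auto
  obtain s'' where s'': "run S1 p' = Some s''" "ok s'' b" "S2b = nx s'' (fst b)"
    using run_snoc[of S1 p' b S2b] s pb by auto
  have bk: "(fst b = KR \<or> fst b = KU) \<and> (s'' = S2a \<or> s'' = S2b)" using okS2b s''(2,3) by simp
  have oka: "ok S2b a" using run_valid_split[of p a q] v c s by auto
  have ak: "fst a = KR \<or> fst a = KU" using oka w by (cases a; cases "fst a") auto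
  have na: "nx S2b (fst a) = S2b" using ak by auto
  have runa: "run S1 (p @ [a]) = Some S2b" using s oka na by (simp add: run_append)
  define j where "j = length p'"
  have lp: "length p = Suc j" using pb j_def by simp
  have H2: "Suc (Suc j) \<le> length c" using c lp by simp
  have tj: "take j c = p'" using c pb j_def by simp
  have tj1: "take (Suc j) c = p" using c lp by simp
  have tj2: "take (Suc (Suc j)) c = p @ [a]" using c lp by simp
  have w0: "rr c j = Suc (ll c j)" using width_inv[OF s''(1)] bk tj unfolding rr_def ll_def by auto
  have w1: "rr c (Suc j) = Suc (ll c (Suc j))" using width_inv[OF s] tj1 unfolding rr_def ll_def by auto
  have w2: "rr c (Suc (Suc j)) = Suc (ll c (Suc j + 1))" using width_inv[OF runa] tj2 unfolding rr_def ll_def by auto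
  have T: "Pv S gle gh (Suc j) \<longleftrightarrow> rr c (Suc (Suc j)) + rr c j \<noteq> rr c (Suc j) + rr c (Suc j)"
    by (rule turn[OF H2 w0 w1]) (use w2 in simp)
  have r1: "rr c (Suc j) = rr c j + dr (fst b)" using tj tj1 pb unfolding rr_def rsum_def by simp
  have r2: "rr c (Suc (Suc j)) = rr c (Suc j) + dr (fst a)" using tj1 tj2 unfolding rr_def rsum_def by simp
  show ?thesis using T r1 r2 lp pb unfolding Sc_def by auto
qed

lemma split3:
  "c1 \<noteq> c2 \<Longrightarrow> (\<exists>q. q \<noteq> [] \<and> c1 = c2 @ q) \<or> (\<exists>q. q \<noteq> [] \<and> c2 = c1 @ q) \<or>
     (\<exists>p a1 a2 q1 q2. a1 \<noteq> a2 \<and> c1 = p @ a1 # q1 \<and> c2 = p @ a2 # q2)"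
proof (induction c1 arbitrary: c2)
  case Nil then show ?case by auto
next
  case (Cons x c1)
  show ?case
  proof (cases c2)
    case Nil then show ?thesis by auto
  next
    case (Cons y c2')
    show ?thesis
    proof (cases "x = y")
      case False then show ?thesis using Cons by (metis append_Nil)
    next
      case True
      then have "c1 \<noteq> c2'" using Cons.prems Cons by simp
      from Cons.IH[OF this] show ?thesis
      proof (elim disjE exE conjE)
        fix q assume "q \<noteq> []" "c1 = c2' @ q" then show ?thesis using Cons True by auto
      next
        fix q assume "q \<noteq> []" "c2' = c1 @ q" then show ?thesis using Cons True by auto
      next
        fix p a1 a2 q1 q2 assume "a1 \<noteq> a2" "c1 = p @ a1 # q1" "c2' = p @ a2 # q2"
        then show ?thesis using Cons True by (metis append_Cons)
      qed
    qed
  qed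
qed

lemma wt_pos: "1 \<le> wt a" by (cases a) auto

lemma weight_pos: "q \<noteq> [] \<Longrightarrow> 0 < weight q"
  by (cases q) (auto simp: weight_def wt_pos)

lemma weight_app: "weight (p @ q) = weight p + weight q" by (simp add: weight_def)

lemma decode:
  assumes v1: "valid c1" and v2: "valid c2" and w: "weight c1 = weight c2"
    and N: "\<And>k. Nv (Sc c1) gh k = Nv (Sc c2) gh k"
    and P: "\<And>k. Pv (Sc c1) gle gh k = Pv (Sc c2) gle gh k"
  shows "c1 = c2"
proof (rule ccontr)
  assume ne: "c1 \<noteq> c2"
  have "\<not> (\<exists>q. q \<noteq> [] \<and> c1 = c2 @ q)" using w weight_pos weight_app by fastforce
  moreover have "\<not> (\<exists>q. q \<noteq> [] \<and> c2 = c1 @ q)" using w weight_pos weight_app by fastforce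
  ultimately obtain p a1 a2 q1 q2 where d: "a1 \<noteq> a2" "c1 = p @ a1 # q1" "c2 = p @ a2 # q2"
    using split3[OF ne] by blast
  obtain s where s: "run S1 p = Some s" "ok s a1" using run_valid_split[of p a1 q1] v1 d by auto
  have s2: "ok s a2" using run_valid_split[of p a2 q2] v2 d s by auto
  have "Nv (Sc c1) gh (Suc (length p)) = wt a1" using Nv_c[OF v1, of "length p"] d by simp
  moreover have "Nv (Sc c2) gh (Suc (length p)) = wt a2" using Nv_c[OF v2, of "length p"] d by simp
  ultimately have wteq: "wt a1 = wt a2" using N by simp
  obtain k1 e1 where a1: "a1 = (k1, e1)" by (cases a1)
  obtain k2 e2 where a2: "a2 = (k2, e2)" by (cases a2)
  show False
  proof (cases "wide k1")
    case False
    then have "\<not> wide k2" "e1 = 0" "e2 = 0" using wteq s s2 a1 a2 by (auto split: if_splits)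
    then have "k1 = k2" using False s(2) s2 a1 a2 by (cases s; cases k1; cases k2) auto
    then show False using d(1) a1 a2 \<open>e1 = 0\<close> \<open>e2 = 0\<close> by simp
  next
    case True
    then have "wide k2" "e1 = e2" using wteq a1 a2 by (auto split: if_splits)
    then have kk: "k1 \<noteq> k2" using d(1) a1 a2 by auto
    have sS: "s = S2b" "dr k1 \<noteq> dr k2" using True \<open>wide k2\<close> kk s(2) s2 a1 a2
      by (cases s; cases k1; cases k2; simp)+
    have "Pv (Sc c1) gle gh (length p) \<longleftrightarrow> dr k1 \<noteq> dr (fst (last p))"
      using Pv_c[OF v1 d(2)] sS s True a1 by simp
    moreover have "Pv (Sc c2) gle gh (length p) \<longleftrightarrow> dr k2 \<noteq> dr (fst (last p))"
      using Pv_c[OF v2 d(3)] sS s \<open>wide k2\<close> a2 by simp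
    moreover have "dr k1 \<le> 1" "dr k2 \<le> 1" "dr (fst (last p)) \<le> 1" using dr_le by auto
    ultimately show False using P[of "length p"] sS(2) by linarith
  qed
qed


definition V :: "st \<Rightarrow> nat \<Rightarrow> ent list set" where
  "V s n = {c. run s c = Some S1 \<and> weight c = n}"

lemma kd_UNIV: "(UNIV :: kd set) = {KE, KO, KR, KU, KK}"
  by (auto intro: kd.exhaust)

lemma finite_kd: "finite (UNIV :: kd set)"
  by (simp add: kd_UNIV)

lemma run_snd: "run s c = Some t \<Longrightarrow> \<forall>a\<in>set c. snd a \<le> 5"
proof (induction c arbitrary: s)
  case (Cons a c)
  then have "ok s a" "run (nx s (fst a)) c = Some t" by (auto split: if_splits)
  moreover obtain k e where "a = (k, e)" by (cases a)
  ultimately show ?case using Cons.IH by (auto split: if_splits)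
qed simp

lemma length_le_weight: "length c \<le> weight c"
proof (induction c)
  case (Cons a c)
  then show ?case using wt_pos[of a] by (simp add: weight_def)
qed (simp add: weight_def)

lemma finite_V: "finite (V s n)"
proof -
  have "V s n \<subseteq> {c. set c \<subseteq> UNIV \<times> {..5} \<and> length c \<le> n}"
    unfolding V_def using run_snd length_le_weight by fastforce
  moreover have "finite {c. set c \<subseteq> (UNIV :: kd set) \<times> {..5::nat} \<and> length c \<le> n}"
    by (rule finite_lists_length_le) (simp add: finite_kd)
  ultimately show ?thesis by (rule finite_subset)
qed

lemma card_rec:
  assumes E: "finite E" and ok: "\<And>a. a \<in> E \<Longrightarrow> ok s a \<and> wt a \<le> n"
  shows "(\<Sum>a\<in>E. card (V (nx s (fst a)) (n - wt a))) \<le> card (V s n)"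
proof -
  have sub: "(\<Union>a\<in>E. (Cons a) ` V (nx s (fst a)) (n - wt a)) \<subseteq> V s n"
  proof
    fix c assume "c \<in> (\<Union>a\<in>E. (Cons a) ` V (nx s (fst a)) (n - wt a))"
    then obtain a c' where a: "a \<in> E" "c = a # c'" "c' \<in> V (nx s (fst a)) (n - wt a)" by auto
    then show "c \<in> V s n" using ok[OF a(1)] unfolding V_def by (auto simp: weight_def)
  qed
  have "card (\<Union>a\<in>E. (Cons a) ` V (nx s (fst a)) (n - wt a)) =
        (\<Sum>a\<in>E. card ((Cons a) ` V (nx s (fst a)) (n - wt a)))"
    by (rule card_UN_disjoint) (auto simp: E finite_V)
  also have "\<dots> = (\<Sum>a\<in>E. card (V (nx s (fst a)) (n - wt a)))"
    by (rule sum.cong) (auto simp: card_image)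
  finally show ?thesis using card_mono[OF finite_V sub] by simp
qed

definition E1 :: "ent set" where "E1 = insert (KE, 0) ((\<lambda>e. (KO, e)) ` {..5})"
definition E2a :: "ent set" where "E2a = insert (KK, 0) ((\<lambda>e. (KR, e)) ` {..5})"
definition E2b :: "ent set" where
  "E2b = insert (KK, 0) ((\<lambda>e. (KR, e)) ` {..5} \<union> (\<lambda>e. (KU, e)) ` {..5})"

abbreviation f :: "st \<Rightarrow> nat \<Rightarrow> real" where "f s n \<equiv> real (card (V s n))"

lemma rec1: "8 \<le> n \<Longrightarrow> f S1 (n - 1) + (\<Sum>e\<le>5. f S2a (n - (2 + e))) \<le> f S1 n"
proof -
  assume n: "8 \<le> n"
  have "(\<Sum>a\<in>E1. card (V (nx S1 (fst a)) (n - wt a))) \<le> card (V S1 n)"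
    by (rule card_rec) (use n in \<open>auto simp: E1_def\<close>)
  moreover have "(\<Sum>a\<in>E1. card (V (nx S1 (fst a)) (n - wt a))) =
      card (V S1 (n - 1)) + (\<Sum>e\<le>5. card (V S2a (n - (2 + e))))"
    unfolding E1_def by (subst sum.insert) (auto simp: sum.reindex inj_on_def)
  ultimately show ?thesis by (simp flip: of_nat_sum)
qed

lemma rec2a: "8 \<le> n \<Longrightarrow> f S1 (n - 1) + (\<Sum>e\<le>5. f S2b (n - (2 + e))) \<le> f S2a n"
proof -
  assume n: "8 \<le> n"
  have "(\<Sum>a\<in>E2a. card (V (nx S2a (fst a)) (n - wt a))) \<le> card (V S2a n)"
    by (rule card_rec) (use n in \<open>auto simp: E2a_def\<close>)
  moreover have "(\<Sum>a\<in>E2a. card (V (nx S2a (fst a)) (n - wt a))) =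
      card (V S1 (n - 1)) + (\<Sum>e\<le>5. card (V S2b (n - (2 + e))))"
    unfolding E2a_def by (subst sum.insert) (auto simp: sum.reindex inj_on_def)
  ultimately show ?thesis by (simp flip: of_nat_sum)
qed

lemma rec2b: "8 \<le> n \<Longrightarrow> f S1 (n - 1) + 2 * (\<Sum>e\<le>5. f S2b (n - (2 + e))) \<le> f S2b n"
proof -
  assume n: "8 \<le> n"
  have "(\<Sum>a\<in>E2b. card (V (nx S2b (fst a)) (n - wt a))) \<le> card (V S2b n)"
    by (rule card_rec) (use n in \<open>auto simp: E2b_def\<close>)
  moreover have "(\<Sum>a\<in>E2b. card (V (nx S2b (fst a)) (n - wt a))) =
      card (V S1 (n - 1)) + 2 * (\<Sum>e\<le>5. card (V S2b (n - (2 + e))))"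
  proof -
    have d: "(\<lambda>e. (KR, e)) ` {..5::nat} \<inter> (\<lambda>e. (KU, e)) ` {..5} = {}" by auto
    show ?thesis unfolding E2b_def
      by (subst sum.insert) (auto simp: sum.union_disjoint[OF _ _ d] sum.reindex inj_on_def)
  qed
  ultimately show ?thesis by (simp flip: of_nat_sum)
qed

definition rho :: real where "rho = 2.1332"

definition PP :: real where "PP = rho^5 + rho^4 + rho^3 + rho^2 + rho + 1"

lemma sum_pow: "(\<Sum>e\<le>5. (c::real) * rho^(m + 7 - (2 + e))) = c * rho^m * PP"
proof -
  have "{..5::nat} = {0,1,2,3,4,5}" by auto
  then show ?thesis unfolding PP_def by (simp add: power_add algebra_simps power2_eq_square)
qed

lemma num1: "rho^7 \<le> rho^6 + 7/5 * PP"
  unfolding PP_def rho_def by (simp add: eval_nat_numeral)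
lemma num2: "7/5 * rho^7 \<le> rho^6 + 5/2 * PP"
  unfolding PP_def rho_def by (simp add: eval_nat_numeral)
lemma num3: "5/2 * rho^7 \<le> rho^6 + 2 * (5/2 * PP)"
  unfolding PP_def rho_def by (simp add: eval_nat_numeral)
lemma num4: "1/1000 * (5/2) * rho^7 \<le> 1"
  unfolding rho_def by (simp add: eval_nat_numeral)
lemma rho_ge1: "1 \<le> rho" unfolding rho_def by simp

lemma run_rep: "run S1 (replicate n (KE, 0)) = Some S1"
  by (induction n) auto

lemma weight_rep: "weight (replicate n (KE, 0)) = n"
  by (induction n) (auto simp: weight_def)

lemma nonempty: "1 \<le> n \<Longrightarrow> 1 \<le> f s n"
proof -
  assume n: "1 \<le> n"
  have "V s n \<noteq> {}"
  proof (cases s)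
    case S1
    then show ?thesis using run_rep weight_rep unfolding V_def by blast
  next
    case S2a
    have "(KK, 0) # replicate (n - 1) (KE, 0) \<in> V s n"
      using S2a run_rep weight_rep n unfolding V_def by (auto simp: weight_def)
    then show ?thesis by blast
  next
    case S2b
    have "(KK, 0) # replicate (n - 1) (KE, 0) \<in> V s n"
      using S2b run_rep weight_rep n unfolding V_def by (auto simp: weight_def)
    then show ?thesis by blast
  qed
  then have "0 < card (V s n)" using finite_V by (simp add: card_gt_0_iff)
  then show ?thesis by simp
qed

lemma bound:
  "1 \<le> n \<Longrightarrow> 1/1000 * rho^n \<le> f S1 n \<and> 1/1000 * (7/5) * rho^n \<le> f S2a n \<and>
     1/1000 * (5/2) * rho^n \<le> f S2b n"
proof (induction n rule: less_induct)
  case (less n)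
  show ?case
  proof (cases "n \<le> 7")
    case True
    have "rho^n \<le> rho^7" by (rule power_increasing[OF True rho_ge1])
    then have "1/1000 * (5/2) * rho^n \<le> 1" using num4 by linarith
    moreover have "0 \<le> rho^n" using rho_ge1 by simp
    ultimately show ?thesis using nonempty[OF less.prems, of S1] nonempty[OF less.prems, of S2a]
        nonempty[OF less.prems, of S2b] by linarith
  next
    case False
    define m where "m = n - 7"
    have m: "n = m + 7" "1 \<le> m" using False by (simp_all add: m_def)
    have IH: "\<And>k. 1 \<le> k \<Longrightarrow> k < n \<Longrightarrow> 1/1000 * rho^k \<le> f S1 k \<and> 1/1000 * (7/5) * rho^k \<le> f S2a k \<and>
      1/1000 * (5/2) * rho^k \<le> f S2b k" using less.IH by blast
    have n8: "8 \<le> n" using False by simp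
    have rm: "0 \<le> rho^m" using rho_ge1 by simp
    have h1: "1/1000 * rho^m * rho^6 \<le> f S1 (n - 1)"
    proof -
      have "1/1000 * rho^(n-1) \<le> f S1 (n - 1)" using IH[of "n - 1"] n8 by simp
      moreover have "n - 1 = m + 6" using m by simp
      then have "rho^(n-1) = rho^m * rho^6" by (simp add: power_add)
      ultimately show ?thesis by simp
    qed
    have hA: "1/1000 * (7/5) * rho^m * PP \<le> (\<Sum>e\<le>5. f S2a (n - (2 + e)))"
    proof -
      have "(\<Sum>e\<le>5. 1/1000 * (7/5) * rho^(m + 7 - (2 + e))) \<le> (\<Sum>e\<le>5. f S2a (n - (2 + e)))"
        by (rule sum_mono) (use IH m in auto)
      then show ?thesis using sum_pow[of "1/1000 * (7/5)" m] by simp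
    qed
    have hB: "1/1000 * (5/2) * rho^m * PP \<le> (\<Sum>e\<le>5. f S2b (n - (2 + e)))"
    proof -
      have "(\<Sum>e\<le>5. 1/1000 * (5/2) * rho^(m + 7 - (2 + e))) \<le> (\<Sum>e\<le>5. f S2b (n - (2 + e)))"
        by (rule sum_mono) (use IH m in auto)
      then show ?thesis using sum_pow[of "1/1000 * (5/2)" m] by simp
    qed
    have rn: "rho^n = rho^m * rho^7" using m by (simp add: power_add)
    have c1: "1/1000 * rho^n \<le> f S1 n"
    proof -
      have "rho^m * rho^7 \<le> rho^m * (rho^6 + 7/5 * PP)" using num1 rm by (rule mult_left_mono)
      then have "1/1000 * rho^n \<le> 1/1000 * rho^m * rho^6 + 1/1000 * (7/5) * rho^m * PP"
        using rn by (simp add: algebra_simps)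
      then show ?thesis using h1 hA rec1[OF n8] by linarith
    qed
    have c2: "1/1000 * (7/5) * rho^n \<le> f S2a n"
    proof -
      have "rho^m * (7/5 * rho^7) \<le> rho^m * (rho^6 + 5/2 * PP)" using num2 rm by (rule mult_left_mono)
      then have "1/1000 * (7/5) * rho^n \<le> 1/1000 * rho^m * rho^6 + 1/1000 * (5/2) * rho^m * PP"
        using rn by (simp add: algebra_simps)
      then show ?thesis using h1 hB rec2a[OF n8] by linarith
    qed
    have c3: "1/1000 * (5/2) * rho^n \<le> f S2b n"
    proof -
      have "rho^m * (5/2 * rho^7) \<le> rho^m * (rho^6 + 2 * (5/2 * PP))" using num3 rm by (rule mult_left_mono)
      then have "1/1000 * (5/2) * rho^n \<le> 1/1000 * rho^m * rho^6 + 2 * (1/1000 * (5/2) * rho^m * PP)"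
        using rn by (simp add: algebra_simps)
      then show ?thesis using h1 hB rec2b[OF n8] by linarith
    qed
    show ?thesis using c1 c2 c3 by simp
  qed
qed


definition bj :: "ent list \<Rightarrow> el \<Rightarrow> nat" where
  "bj c = (SOME g. bij_betw g (Sc c) {0..<card (Sc c)})"

definition relc :: "ent list \<Rightarrow> nat rel" where
  "relc c = relof {0..<card (Sc c)} (\<lambda>i j. gle (inv_into (Sc c) (bj c) i) (inv_into (Sc c) (bj c) j))"

lemma finite_Sc: "valid c \<Longrightarrow> finite (Sc c)"
proof -
  assume v: "valid c"
  interpret shape "length c" "ll c" "rr c" "ee c" by (rule shape_c[OF v])
  show ?thesis unfolding Sc_def by (rule finite_S)
qed

lemma bij_bj: "valid c \<Longrightarrow> bij_betw (bj c) (Sc c) {0..<card (Sc c)}"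
  unfolding bj_def using ex_bij_betw_finite_nat[OF finite_Sc] by (rule someI_ex)

lemma vlat_Sc: "valid c \<Longrightarrow> vlat (Sc c) gle gjn gmt gh"
proof -
  assume v: "valid c"
  interpret shape "length c" "ll c" "rr c" "ee c" by (rule shape_c[OF v])
  show ?thesis unfolding Sc_def by (rule vlat_S)
qed

lemma lower_nb_Sc: "valid c \<Longrightarrow> u \<in> Sc c \<Longrightarrow> 0 < gh u \<Longrightarrow> \<exists>v\<in>Sc c. gle v u \<and> v \<noteq> u \<and> Suc (gh v) = gh u"
proof -
  assume v: "valid c"
  interpret shape "length c" "ll c" "rr c" "ee c" by (rule shape_c[OF v])
  show "u \<in> Sc c \<Longrightarrow> 0 < gh u \<Longrightarrow> \<exists>v\<in>Sc c. gle v u \<and> v \<noteq> u \<and> Suc (gh v) = gh u"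
    unfolding Sc_def by (rule lower_nb)
qed

lemma modular_relc: "valid c \<Longrightarrow> modular_lattice_on {0..<card (Sc c)} (relc c)"
proof -
  assume v: "valid c"
  have "vlat {0..<card (Sc c)} (\<lambda>i j. gle (inv_into (Sc c) (bj c) i) (inv_into (Sc c) (bj c) j))
      (\<lambda>i j. bj c (gjn (inv_into (Sc c) (bj c) i) (inv_into (Sc c) (bj c) j)))
      (\<lambda>i j. bj c (gmt (inv_into (Sc c) (bj c) i) (inv_into (Sc c) (bj c) j)))
      (\<lambda>i. gh (inv_into (Sc c) (bj c) i))"
    by (rule vlat_transport[OF vlat_Sc[OF v] bij_bj[OF v] refl])
  then show ?thesis unfolding relc_def by (rule vlat.modular)
qed

lemma relc_iff:
  assumes v: "valid c" and u: "u \<in> Sc c" and w: "w \<in> Sc c"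
  shows "(bj c u, bj c w) \<in> relc c \<longleftrightarrow> gle u w"
proof -
  have b: "bij_betw (bj c) (Sc c) {0..<card (Sc c)}" by (rule bij_bj[OF v])
  have "bj c u \<in> {0..<card (Sc c)}" "bj c w \<in> {0..<card (Sc c)}" using b u w bij_betwE by blast+
  moreover have "inv_into (Sc c) (bj c) (bj c u) = u" "inv_into (Sc c) (bj c) (bj c w) = w"
    using b u w bij_betw_inv_into_left by fast+
  ultimately show ?thesis unfolding relc_def relof_def by simp
qed

lemma iso_codes:
  assumes v1: "valid c1" and v2: "valid c2" and n1: "card (Sc c1) = n" and n2: "card (Sc c2) = n"
    and iso: "order_iso_on {0..<n} (relc c2) (relc c1)"
    and w: "weight c1 = weight c2"
  shows "c1 = c2"
proof -
  obtain f where f: "bij_betw f {0..<n} {0..<n}"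
    and fo: "\<And>x y. x \<in> {0..<n} \<Longrightarrow> y \<in> {0..<n} \<Longrightarrow> (x, y) \<in> relc c2 \<longleftrightarrow> (f x, f y) \<in> relc c1"
    using iso unfolding order_iso_on_def by blast
  have b1: "bij_betw (bj c1) (Sc c1) {0..<n}" using bij_bj[OF v1] n1 by simp
  have b2: "bij_betw (bj c2) (Sc c2) {0..<n}" using bij_bj[OF v2] n2 by simp
  define \<phi> where "\<phi> = inv_into (Sc c1) (bj c1) \<circ> f \<circ> bj c2"
  have bphi: "bij_betw \<phi> (Sc c2) (Sc c1)" unfolding \<phi>_def
    by (rule bij_betw_trans[OF b2 bij_betw_trans[OF f bij_betw_inv_into[OF b1]]])
  have phi_in: "\<And>u. u \<in> Sc c2 \<Longrightarrow> \<phi> u \<in> Sc c1" using bphi bij_betwE by blast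
  have bjphi: "\<And>u. u \<in> Sc c2 \<Longrightarrow> bj c1 (\<phi> u) = f (bj c2 u)"
  proof -
    fix u assume u: "u \<in> Sc c2"
    have "bj c2 u \<in> {0..<n}" using bij_betwE[OF b2] u by blast
    then have "f (bj c2 u) \<in> {0..<n}" using bij_betwE[OF f] by blast
    then have "bj c1 (inv_into (Sc c1) (bj c1) (f (bj c2 u))) = f (bj c2 u)"
      by (rule bij_betw_inv_into_right[OF b1])
    then show "bj c1 (\<phi> u) = f (bj c2 u)" unfolding \<phi>_def by simp
  qed
  have ord: "\<And>u w. u \<in> Sc c2 \<Longrightarrow> w \<in> Sc c2 \<Longrightarrow> gle u w \<longleftrightarrow> gle (\<phi> u) (\<phi> w)"
  proof -
    fix u w assume u: "u \<in> Sc c2" and w: "w \<in> Sc c2"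
    have "gle u w \<longleftrightarrow> (bj c2 u, bj c2 w) \<in> relc c2" using relc_iff[OF v2 u w] by simp
    also have "\<dots> \<longleftrightarrow> (f (bj c2 u), f (bj c2 w)) \<in> relc c1"
    proof -
      have "bj c2 u \<in> {0..<n}" "bj c2 w \<in> {0..<n}" using bij_betwE[OF b2] u w by blast+
      then show ?thesis by (rule fo)
    qed
    also have "\<dots> \<longleftrightarrow> (bj c1 (\<phi> u), bj c1 (\<phi> w)) \<in> relc c1" using bjphi u w by simp
    also have "\<dots> \<longleftrightarrow> gle (\<phi> u) (\<phi> w)" using relc_iff[OF v1 phi_in[OF u] phi_in[OF w]] .
    finally show "gle u w \<longleftrightarrow> gle (\<phi> u) (\<phi> w)" .
  qed
  interpret V1: vlat "Sc c1" gle gjn gmt gh by (rule vlat_Sc[OF v1])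
  interpret V2: vlat "Sc c2" gle gjn gmt gh by (rule vlat_Sc[OF v2])
  have g: "giso (Sc c2) gle gh (Sc c1) gle gh \<phi>"
  proof
    show "bij_betw \<phi> (Sc c2) (Sc c1)" by (rule bphi)
    show "\<And>u v. u \<in> Sc c2 \<Longrightarrow> v \<in> Sc c2 \<Longrightarrow> gle u v = gle (\<phi> u) (\<phi> v)" by (rule ord)
    show "\<And>x y. x \<in> Sc c2 \<Longrightarrow> y \<in> Sc c2 \<Longrightarrow> gle x y \<Longrightarrow> x \<noteq> y \<Longrightarrow> gh x < gh y" by (rule V2.hstrict)
    show "\<And>x y. x \<in> Sc c1 \<Longrightarrow> y \<in> Sc c1 \<Longrightarrow> gle x y \<Longrightarrow> x \<noteq> y \<Longrightarrow> gh x < gh y" by (rule V1.hstrict)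
    show "\<And>u. u \<in> Sc c2 \<Longrightarrow> 0 < gh u \<Longrightarrow> \<exists>v\<in>Sc c2. gle v u \<and> v \<noteq> u \<and> Suc (gh v) = gh u"
      by (rule lower_nb_Sc[OF v2])
    show "\<And>u. u \<in> Sc c1 \<Longrightarrow> 0 < gh u \<Longrightarrow> \<exists>v\<in>Sc c1. gle v u \<and> v \<noteq> u \<and> Suc (gh v) = gh u"
      by (rule lower_nb_Sc[OF v1])
  qed
  have "\<And>k. Nv (Sc c1) gh k = Nv (Sc c2) gh k" "\<And>k. Pv (Sc c1) gle gh k = Pv (Sc c2) gle gh k"
    using giso_inv[OF g] by auto
  then show ?thesis using decode[OF v1 v2 w] by blast
qed

lemma count_lower:
  assumes n: "1 \<le> n"
  shows "card (V S1 (n - 1)) \<le> num_modular_lattices n"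
proof -
  define M where "M = {r. modular_lattice_on {0..<n} r}"
  define Q where "Q = {(r, s). modular_lattice_on {0..<n} r \<and> modular_lattice_on {0..<n} s
                    \<and> order_iso_on {0..<n} r s}"
  have num: "num_modular_lattices n = card (M // Q)" unfolding num_modular_lattices_def M_def Q_def by simp
  have finM: "finite M"
  proof -
    have "M \<subseteq> Pow ({0..<n} \<times> {0..<n})" unfolding M_def modular_lattice_on_def lattice_on_def by auto
    then show ?thesis by (rule finite_subset) simp
  qed
  have finQ: "finite (M // Q)" by (rule finite_quotient[OF finM]) (auto simp: M_def Q_def)
  have vc: "\<And>c. c \<in> V S1 (n - 1) \<Longrightarrow> valid c \<and> card (Sc c) = n \<and> weight c = n - 1"
    unfolding V_def valid_def using card_Sc n unfolding valid_def by auto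
  have inM: "\<And>c. c \<in> V S1 (n - 1) \<Longrightarrow> relc c \<in> M"
    unfolding M_def using vc modular_relc by fastforce
  have refl: "\<And>r. r \<in> M \<Longrightarrow> (r, r) \<in> Q"
  proof -
    fix r assume "r \<in> M"
    moreover have "order_iso_on {0..<n} r r" unfolding order_iso_on_def
      by (rule exI[of _ id]) simp
    ultimately show "(r, r) \<in> Q" unfolding M_def Q_def by simp
  qed
  have "inj_on (\<lambda>c. Q `` {relc c}) (V S1 (n - 1))"
  proof
    fix c1 c2 assume c1: "c1 \<in> V S1 (n - 1)" and c2: "c2 \<in> V S1 (n - 1)"
      and eq: "Q `` {relc c1} = Q `` {relc c2}"
    have "relc c1 \<in> Q `` {relc c1}" using refl[OF inM[OF c1]] by simp
    then have "(relc c2, relc c1) \<in> Q" using eq by simp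
    then have "order_iso_on {0..<n} (relc c2) (relc c1)" unfolding Q_def by simp
    then show "c1 = c2" using iso_codes vc[OF c1] vc[OF c2] by metis
  qed
  moreover have "(\<lambda>c. Q `` {relc c}) ` V S1 (n - 1) \<subseteq> M // Q"
    using inM by (auto intro: quotientI)
  ultimately have "card (V S1 (n - 1)) \<le> card (M // Q)" using finQ by (rule card_inj_on_le)
  then show ?thesis using num by simp
qed

theorem corollary2p4:
  shows "\<exists>b::real. b > 0 \<and>
    (\<forall>\<^sub>F n in sequentially. real (num_modular_lattices n) \<ge> b * 2.1332 ^ n)"
proof (intro exI conjI)
  show "(0::real) < 1 / 1000 / 2.1332" by simp
  show "\<forall>\<^sub>F n in sequentially. real (num_modular_lattices n) \<ge> 1 / 1000 / 2.1332 * 2.1332 ^ n"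
    unfolding eventually_sequentially
  proof (intro exI allI impI)
    fix n :: nat assume n: "2 \<le> n"
    have "1/1000 * rho^(n - 1) \<le> f S1 (n - 1)" using bound[of "n - 1"] n by simp
    also have "\<dots> \<le> real (num_modular_lattices n)" using count_lower[of n] n by simp
    finally have a: "1/1000 * rho^(n - 1) \<le> real (num_modular_lattices n)" .
    have nn: "n = Suc (n - 1)" using n by simp
    have "rho^n = rho * rho^(n - 1)" by (subst nn) simp
    then have "1 / 1000 / 2.1332 * 2.1332 ^ n = 1/1000 * rho^(n - 1)" unfolding rho_def by simp
    then show "1 / 1000 / 2.1332 * 2.1332 ^ n \<le> real (num_modular_lattices n)" using a by simp
  qed
qed


end
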